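(* Under the hypotheses of Theorem 1 (UJSC network, weight rules, interior-point condition for $(\mathrm{ADRCP}^k)$, and stepsizes with $\alpha(t)>0$, $\sum_t\alpha(t)=\infty$, $\sum_t\alpha^2(t)<\infty$, $\alpha$ nonincreasing), let $\theta_i(t)$ be generated by the DPG iteration $\theta_i(t+1)=P_{\Omega_i}\big[\sum_{j}a_{ij}(t)\theta_j(t)-\alpha(t)c\big]$, and write $\theta=(x,u)$ and $h_i(x,u)=f_i(x)-u_i$. Then for all tolerances $\epsilon_1,\epsilon_2,\epsilon_3>0$ there is a finite $T\ge1$ such that for every $t\ge T$ and all $i,j\in\mathcal V$: $\|\theta_i(t)-\theta_j(t)\|\le\epsilon_1$, $\|\theta_i(t)-\theta_i(t-1)\|\le\epsilon_2$, $|h_i(\theta_i(t))-h_i(\theta_i(t-1))|\le\epsilon_3$, and moreover $\theta_i(t)\in\Omega_i$ (local feasibility) for every $t\ge 1$.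
   Context: Network: agents $\mathcal V=\{1,\dots,m\}$. For each time slot $t\in\mathbb Z_{\ge 0}$ there is a directed graph $\mathcal G(t)=(\mathcal V,\mathcal E(t))$; $(j,i)\in\mathcal E(t)$ means agent $j$ can send information to agent $i$ at slot $t$, and $N_i^{in}(t)=\{j:(j,i)\in\mathcal E(t)\}$. UJSC (uniform joint strong connectivity): there is an integer $S>0$ such that for every $t\ge 0$ the graph $(\mathcal V,\mathcal E(t)\cup\cdots\cup\mathcal E(t+S-1))$ is strongly connected. Weight rules: $A(t)=[a_{ij}(t)]\in\mathbb R^{m\times m}$ with $a_{ij}(t)>0$ if $j\in N_i^{in}(t)$ and $a_{ij}(t)=0$ otherwise; $\sum_{j}a_{ij}(t)=1$ for all $i,t$ (row stochastic, not necessarily column stochastic); $(i,i)\in\mathcal E(t)$ for all $i,t$; and there is $\gamma\in(0,1)$ with $a_{ij}(t)\ge\gamma$ whenever $a_{ij}(t)>0$ (in particular $a_{ii}(t)\ge\gamma$). Problem data: $X\subseteq\mathbb R^n$ is nonempty, compact and convex. For each $i\in\mathcal V$: $f_i:\mathbb R^n\to\mathbb R$ is convex; $Y_i\subseteq\mathbb R$ is nonempty, compact, convex; $g_i:\mathbb R^n\times Y_i\to\mathbb R$ is continuous on $X\times Y_i$ and convex in $x$ for each fixed $y$; $Y_i^k\subset Y_i$ is a finite set and $\epsilon_i^k>0$. The problem $(\mathrm{ADRCP}^k)$ is: minimize $\sum_{i=1}^m f_i(x)$ over $x\in X$ subject to $g_i(x,y)\le-\epsilon_i^k$ for all $y\in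 Y_i^k$ and all $i$. Interior-point condition: the feasible set of $(\mathrm{ADRCP}^k)$ is nonempty and there is $\tilde x$ in it with $g_i(\tilde x,y)<-\epsilon_i^k$ for all $y\in Y_i^k$, $i\in\mathcal V$. Epigraphic reformulation: $\theta=(x,u)\in\Theta=X\times\mathbb R^m$; $\Omega_i=\{(x,u)\in\Theta: f_i(x)-u_i\le 0,\ g_i(x,y)\le-\epsilon_i^k\ \forall y\in Y_i^k\}$; $\Omega=\bigcap_{i=1}^m\Omega_i$; $c=(0_n,\tfrac1m\mathbf 1_m)\in\mathbb R^{n+m}$ and $f_0(\theta)=c^\top\theta=\tfrac1m\sum_i u_i$. $\Omega^*$ is the set of minimizers of $f_0$ over $\Omega$ and $f_0^*$ the optimal value. $P_K$ denotes Euclidean projection onto a closed convex set $K$. Initial points $\theta_i(0)\in\mathbb R^{n+m}$ are arbitrary. *)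

theory Defs
  imports "HOL-Analysis.Analysis"
begin

text \<open>Agents are the elements of a finite type 'm (so m = CARD('m));
  decision variables x live in real^'n; theta = (x,u) in real^'n \<times> real^'m,
  whose product norm is the Euclidean norm of R^(n+m).\<close>

definition Omega_i ::
  "(real^'n) set \<Rightarrow> ('m \<Rightarrow> real^'n \<Rightarrow> real) \<Rightarrow> ('m \<Rightarrow> real^'n \<Rightarrow> real \<Rightarrow> real)
   \<Rightarrow> ('m \<Rightarrow> real set) \<Rightarrow> ('m \<Rightarrow> real) \<Rightarrow> 'm \<Rightarrow> ((real^'n) \<times> (real^'m)) set" where
  "Omega_i X f g Yk eps i =
     {(x, u). x \<in> X \<and> f i x - u $ i \<le> 0 \<and> (\<forall>y\<in>Yk i. g i x y \<le> - eps i)}"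

definition cvec :: "(real^'n) \<times> (real^'m)" where
  "cvec = (0, (\<chi> i. 1 / real CARD('m)))"

definition strongly_connected_graph :: "('m \<times> 'm) set \<Rightarrow> bool" where
  "strongly_connected_graph E \<longleftrightarrow> (\<forall>i j. (i, j) \<in> E\<^sup>*)"

definition UJSC :: "(nat \<Rightarrow> ('m \<times> 'm) set) \<Rightarrow> bool" where
  "UJSC E \<longleftrightarrow> (\<exists>S::nat. S > 0 \<and>
      (\<forall>t. strongly_connected_graph (\<Union>s\<in>{t..<t+S}. E s)))"

definition weight_rules :: "(nat \<Rightarrow> ('m \<times> 'm) set) \<Rightarrow> (nat \<Rightarrow> 'm \<Rightarrow> 'm \<Rightarrow> real) \<Rightarrow> bool" where
  "weight_rules E a \<longleftrightarrow>
     (\<forall>t i j. ((j, i) \<in> E t \<longrightarrow> a t i j > 0) \<and> ((j, i) \<notin> E t \<longrightarrow> a t i j = 0)) \<and>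
     (\<forall>t i. (\<Sum>j\<in>UNIV. a t i j) = 1) \<and>
     (\<forall>t i. (i, i) \<in> E t) \<and>
     (\<exists>\<gamma>. 0 < \<gamma> \<and> \<gamma> < 1 \<and> (\<forall>t i j. a t i j > 0 \<longrightarrow> a t i j \<ge> \<gamma>))"

end

theory Submission
  imports Defs "HOL-Analysis.Analysis"
begin
lemma convex_lipschitz_compact:
  fixes f :: "'a::euclidean_space \<Rightarrow> real"
  assumes cf: "convex_on UNIV f" and K: "compact K"
  shows "\<exists>L\<ge>0. \<forall>x\<in>K. \<forall>y\<in>K. \<bar>f x - f y\<bar> \<le> L * norm (x - y)"
proof -
  define K' where "K' = {x + y | x y. x \<in> K \<and> y \<in> cball 0 1}"
  have "compact K'" unfolding K'_def by (rule compact_sums[OF K compact_cball])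
  moreover have "continuous_on UNIV f" by (rule convex_on_continuous[OF open_UNIV cf])
  ultimately have "compact (f ` K')" by (meson compact_continuous_image continuous_on_subset subset_UNIV)
  then obtain B where B: "\<And>z. z \<in> K' \<Longrightarrow> \<bar>f z\<bar> \<le> B"
    using compact_imp_bounded[of "f ` K'"] unfolding bounded_iff by auto
  have key: "f y - f x \<le> 2 * B * norm (y - x)" if x: "x \<in> K" and y: "y \<in> K" for x y
  proof (cases "x = y")
    case True then show ?thesis by simp
  next
    case False
    define d where "d = norm (y - x)"
    have d: "d > 0" using False by (simp add: d_def)
    define z where "z = y + (1/d) *\<^sub>R (y - x)"
    have "(1/d) *\<^sub>R (y - x) \<in> cball 0 1" using d by (simp add: d_def)
    then have zK: "z \<in> K'" unfolding K'_def z_def using y by blast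
    have xK: "x \<in> K'" unfolding K'_def using x by (metis (mono_tags, lifting) add.right_neutral centre_in_cball mem_Collect_eq zero_less_one less_imp_le)
    define t where "t = d / (1 + d)"
    have t: "0 \<le> t" "t \<le> 1" "t \<le> d" using d by (auto simp: t_def field_simps)
    have "(1 - t) *\<^sub>R x + t *\<^sub>R z = y"
    proof -
      have e: "1/(1+d) + d/(1+d) = 1" using d by (simp add: field_simps)
      show ?thesis
        using d unfolding t_def z_def apply (simp add: field_simps scaleR_add_right scaleR_diff_right algebra_simps)
        by (metis e scaleR_add_left scaleR_one)
    qed
    with convex_onD[OF cf t(1,2), of x z] have "f y \<le> (1 - t) * f x + t * f z" by simp
    then have "f y - f x \<le> t * (f z - f x)" by (simp add: algebra_simps)
    also have "\<dots> \<le> t * (2 * B)" using B[OF zK] B[OF xK] t by (intro mult_left_mono) auto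
    also have "\<dots> \<le> d * (2 * B)" using t B[OF xK] by (intro mult_right_mono) auto
    finally show ?thesis by (simp add: d_def mult.commute)
  qed
  have B0: "B \<ge> 0" if ne: "K \<noteq> {}"
  proof -
    obtain x where "x \<in> K" using ne by auto
    then have "x \<in> K'" unfolding K'_def by (metis (mono_tags, lifting) add.right_neutral centre_in_cball mem_Collect_eq zero_less_one less_imp_le)
    then show ?thesis using B by force
  qed
  show ?thesis
  proof (cases "K = {}")
    case True then show ?thesis by auto
  next
    case False
    show ?thesis
      apply (rule exI[of _ "2*B"])
      using B0[OF False] key key[of _ _] by (smt (verit, best) norm_minus_commute)
  qed
qed

lemma proj_ineq:
  fixes K :: "'a::euclidean_space set"
  assumes "convex K" "closed K" "z \<in> K"
  shows "(norm (closest_point K v - z))\<^sup>2 + (norm (closest_point K v - v))\<^sup>2 \<le> (norm (v - z))\<^sup>2"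
proof -
  let ?p = "closest_point K v"
  have "inner (v - ?p) (z - ?p) \<le> 0" by (rule closest_point_dot[OF assms])
  moreover have "v - z = (v - ?p) - (z - ?p)" by simp
  ultimately show ?thesis
    unfolding power2_norm_eq_inner
    by (simp add: inner_diff_left inner_diff_right inner_commute algebra_simps)
qed

lemma rtrancl_cross:
  assumes "(x, y) \<in> R\<^sup>*" "x \<in> A" "y \<notin> A"
  shows "\<exists>u v. (u, v) \<in> R \<and> u \<in> A \<and> v \<notin> A"
  using assms by (induction rule: rtrancl_induct) auto

lemma spread:
  fixes a :: "nat \<Rightarrow> 'm::finite \<Rightarrow> 'm \<Rightarrow> real" and E :: "nat \<Rightarrow> ('m \<times> 'm) set"
    and y :: "nat \<Rightarrow> 'm \<Rightarrow> real" and b :: "nat \<Rightarrow> real"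
  assumes S: "S > 0" "\<And>t. strongly_connected_graph (\<Union>s\<in>{t..<t+S}. E s)"
    and anonneg: "\<And>t i j. a t i j \<ge> 0" and asum: "\<And>t i. (\<Sum>j\<in>UNIV. a t i j) = 1"
    and aedge: "\<And>t i j. (j,i) \<in> E t \<Longrightarrow> a t i j \<ge> \<gamma>" and aii: "\<And>t i. a t i i \<ge> \<gamma>"
    and \<gamma>: "0 < \<gamma>"
    and step: "\<And>\<tau> i. y (Suc (s+\<tau>)) i \<le> (\<Sum>j\<in>UNIV. a (s+\<tau>) i j * y (s+\<tau>) j) + b (s+\<tau>)"
    and init: "\<And>i. y s i \<le> U" and jz: "y s jz \<le> U - p" and p: "p \<ge> 0"
    and n: "n \<ge> CARD('m)*S"
  shows "y (s+n) i \<le> U + (\<Sum>\<tau><n. b (s+\<tau>)) - \<gamma>^n * p"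
proof -
  define Ub where "Ub n = U + (\<Sum>\<tau><n. b (s+\<tau>))" for n
  define St where "St n = {i. y (s+n) i \<le> Ub n - \<gamma>^n * p}" for n
  have inv: "y (s+n) i \<le> Ub n" for n i
  proof (induction n arbitrary: i)
    case 0 then show ?case using init by (simp add: Ub_def)
  next
    case (Suc n)
    have "y (s + Suc n) i \<le> (\<Sum>j\<in>UNIV. a (s+n) i j * y (s+n) j) + b (s+n)"
      using step[of n i] by simp
    also have "(\<Sum>j\<in>UNIV. a (s+n) i j * y (s+n) j) \<le> (\<Sum>j\<in>UNIV. a (s+n) i j * Ub n)"
      by (intro sum_mono mult_left_mono Suc anonneg)
    also have "\<dots> = Ub n" using asum by (simp add: sum_distrib_right[symmetric])
    finally show ?case by (simp add: Ub_def)
  qed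
  have prp: "i \<in> St (Suc n)" if l: "l \<in> St n" and al: "a (s+n) i l \<ge> \<gamma>" for n i l
  proof -
    let ?q = "\<gamma>^n * p"
    have q: "?q \<ge> 0" using \<gamma> p by simp
    have "y (s + Suc n) i \<le> (\<Sum>j\<in>UNIV. a (s+n) i j * y (s+n) j) + b (s+n)"
      using step[of n i] by simp
    also have "(\<Sum>j\<in>UNIV. a (s+n) i j * y (s+n) j) \<le> (\<Sum>j\<in>UNIV. a (s+n) i j * (Ub n - (if j = l then ?q else 0)))"
      using l inv anonneg by (intro sum_mono mult_left_mono) (auto simp: St_def)
    also have "\<dots> = (\<Sum>j\<in>UNIV. a (s+n) i j * Ub n) - (\<Sum>j\<in>UNIV. a (s+n) i j * (if j = l then ?q else 0))"
      by (simp add: right_diff_distrib sum_subtractf)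
    also have "\<dots> = Ub n - a (s+n) i l * ?q"
      using asum by (simp add: sum_distrib_right[symmetric] if_distrib sum.delta cong: if_cong)
    finally have A: "y (s + Suc n) i \<le> Ub n - a (s+n) i l * ?q + b (s+n)" by simp
    have "a (s+n) i l * ?q \<ge> \<gamma> * ?q" using al q by (intro mult_right_mono) auto
    with A show ?thesis by (simp add: St_def Ub_def algebra_simps)
  qed
  have self: "i \<in> St n \<Longrightarrow> i \<in> St (Suc n)" for i n using prp aii by blast
  have mono: "St n \<subseteq> St (n + k)" for n k
    by (induction k) (use self in auto)
  have j0in: "jz \<in> St n" for n using mono[of 0 n] jz by (auto simp: St_def Ub_def)
  have grow: "\<exists>i. i \<notin> St n \<and> i \<in> St (n + S)" if ne: "St n \<noteq> UNIV" for n
  proof -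
    obtain i0 where i0: "i0 \<notin> St n" using ne by auto
    have "(jz, i0) \<in> (\<Union>t\<in>{s+n..<s+n+S}. E t)\<^sup>*"
      using S(2)[of "s+n"] unfolding strongly_connected_graph_def by blast
    then obtain u v where uv: "(u, v) \<in> (\<Union>t\<in>{s+n..<s+n+S}. E t)" "u \<in> St n" "v \<notin> St n"
      using rtrancl_cross[of jz i0 _ "St n"] j0in i0 by blast
    then obtain t where t: "t \<in> {s+n..<s+n+S}" "(u, v) \<in> E t" by blast
    define k where "k = t - (s + n)"
    have tk: "t = s + (n + k)" "k < S" using t by (auto simp: k_def)
    have "u \<in> St (n + k)" using mono uv(2) by blast
    then have "v \<in> St (Suc (n + k))" using prp aedge t(2) tk(1) by metis
    moreover have "St (Suc (n + k)) \<subseteq> St (n + S)"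
      using mono[of "Suc (n+k)" "S - Suc k"] tk(2) by simp
    ultimately show ?thesis using uv(3) by blast
  qed
  have card: "card (St (k * S)) \<ge> min (Suc k) CARD('m)" for k
  proof (induction k)
    case 0
    have "St 0 \<noteq> {}" using j0in[of 0] by blast
    then have "card (St 0) \<ge> 1" by (simp add: card_gt_0_iff Suc_le_eq)
    then show ?case by simp
  next
    case (Suc k)
    show ?case
    proof (cases "St (k*S) = UNIV")
      case True
      then have "St (Suc k * S) = UNIV" using mono[of "k*S" S] by (auto simp: add.commute)
      then show ?thesis by simp
    next
      case False
      obtain i where i: "i \<notin> St (k*S)" "i \<in> St (k*S + S)" using grow[OF False] by blast
      have "insert i (St (k*S)) \<subseteq> St (Suc k * S)" using i mono[of "k*S" S] by (auto simp: add.commute)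
      then have "card (insert i (St (k*S))) \<le> card (St (Suc k * S))" by (intro card_mono) auto
      then show ?thesis using i(1) Suc by simp
    qed
  qed
  have "St (CARD('m) * S) = UNIV"
  proof -
    have "CARD('m) \<le> card (St (CARD('m) * S))" using card[of "CARD('m)"] by simp
    then show ?thesis using card_seteq[of UNIV "St (CARD('m) * S)"] by auto
  qed
  then have "St n = UNIV" using mono[of "CARD('m) * S" "n - CARD('m)*S"] n by auto
  then show ?thesis by (auto simp: St_def Ub_def)
qed

lemma double_sum_shift:
  fixes g :: "nat \<Rightarrow> real"
  assumes g: "\<And>s. g s \<ge> 0"
  shows "(\<Sum>s<N. \<Sum>j<Suc L'. g (s+j)) \<le> Suc L' * (\<Sum>\<sigma><N+L'. g \<sigma>)"
proof -
  have "(\<Sum>s<N. \<Sum>j<Suc L'. g (s+j)) = (\<Sum>j<Suc L'. \<Sum>s<N. g (s+j))" by (rule sum.swap)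
  also have "\<dots> \<le> (\<Sum>j<Suc L'. (\<Sum>\<sigma><N+L'. g \<sigma>))"
  proof (intro sum_mono)
    fix j assume j: "j \<in> {..<Suc L'}"
    have "(\<Sum>s<N. g (s+j)) = (\<Sum>\<sigma>\<in>(\<lambda>s. s+j) ` {..<N}. g \<sigma>)"
      by (subst sum.reindex) (auto simp: inj_on_def)
    also have "\<dots> \<le> (\<Sum>\<sigma><N+L'. g \<sigma>)"
      using j by (intro sum_mono2) (auto simp: g)
    finally show "(\<Sum>s<N. g (s+j)) \<le> (\<Sum>\<sigma><N+L'. g \<sigma>)" .
  qed
  also have "\<dots> = Suc L' * (\<Sum>\<sigma><N+L'. g \<sigma>)" by simp
  finally show ?thesis .
qed


lemma sq_comb: fixes a b \<rho> :: real assumes "0 \<le> \<rho>" "\<rho> < 1"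
  shows "(\<rho> * a + b)\<^sup>2 \<le> \<rho> * a\<^sup>2 + b\<^sup>2 / (1 - \<rho>)"
proof -
  define c where "c = b / (1 - \<rho>)"
  have b: "b = (1 - \<rho>) * c" using assms unfolding c_def by auto
  have "(\<rho> * a + (1 - \<rho>) * c)\<^sup>2 \<le> \<rho> * a\<^sup>2 + (1 - \<rho>) * c\<^sup>2"
  proof -
    have "\<rho> * a\<^sup>2 + (1 - \<rho>) * c\<^sup>2 - (\<rho> * a + (1 - \<rho>) * c)\<^sup>2 = \<rho> * (1 - \<rho>) * (a - c)\<^sup>2"
      by (simp add: power2_eq_square algebra_simps)
    moreover have "\<rho> * (1 - \<rho>) * (a - c)\<^sup>2 \<ge> 0" using assms by simp
    ultimately show ?thesis by linarith
  qed
  moreover have "(1 - \<rho>) * c\<^sup>2 = b\<^sup>2 / (1 - \<rho>)"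
  proof -
    have ne: "1 - \<rho> \<noteq> 0" using assms by simp
    have "(1 - \<rho>) * c\<^sup>2 = (1 - \<rho>) * (b\<^sup>2 / (1 - \<rho>)\<^sup>2)" by (simp add: c_def power_divide)
    also have "\<dots> = b\<^sup>2 / (1 - \<rho>)" using ne by (simp add: power2_eq_square)
    finally show ?thesis .
  qed
  ultimately show ?thesis using b by simp
qed

lemma sum_sq_le_card:
  fixes x :: "nat \<Rightarrow> real"
  shows "(\<Sum>j<L. x j)\<^sup>2 \<le> L * (\<Sum>j<L. (x j)\<^sup>2)"
proof -
  have "(\<Sum>j<L. x j)\<^sup>2 = (\<Sum>i<L. \<Sum>j<L. x i * x j)"
    by (simp add: power2_eq_square sum_product)
  also have "\<dots> \<le> (\<Sum>i<L. \<Sum>j<L. ((x i)\<^sup>2 + (x j)\<^sup>2) / 2)"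
  proof (intro sum_mono)
    fix i j
    have "0 \<le> (x i - x j)\<^sup>2" by simp
    then show "x i * x j \<le> ((x i)\<^sup>2 + (x j)\<^sup>2) / 2" by (simp add: power2_eq_square algebra_simps)
  qed
  also have "\<dots> = (\<Sum>i<L. \<Sum>j<L. (x i)\<^sup>2 / 2) + (\<Sum>i<L. \<Sum>j<L. (x j)\<^sup>2 / 2)"
    by (simp add: add_divide_distrib sum.distrib)
  also have "\<dots> = L * (\<Sum>j<L. (x j)\<^sup>2)"
    by (simp add: sum_divide_distrib[symmetric] sum_distrib_left[symmetric] sum.swap[of _ "{..<L}" "{..<L}"])
  finally show ?thesis .
qed

lemma amgm_eps: fixes a d e :: real assumes "e > 0"
  shows "a * d \<le> a\<^sup>2 / (2*e) + e/2 * d\<^sup>2"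
proof -
  have "0 \<le> (a - e * d)\<^sup>2" by simp
  then have "2 * e * (a * d) \<le> a\<^sup>2 + e\<^sup>2 * d\<^sup>2" by (simp add: power2_eq_square algebra_simps)
  then show ?thesis using assms by (simp add: field_simps power2_eq_square)
qed

lemma seq_main:
  fixes \<alpha> D E :: "nat \<Rightarrow> real"
  assumes \<alpha>0: "\<And>s. \<alpha> s \<ge> 0" and \<alpha>mono: "\<And>s. \<alpha> (Suc s) \<le> \<alpha> s" and \<alpha>2: "summable (\<lambda>s. (\<alpha> s)\<^sup>2)"
    and D0: "\<And>s. D s \<ge> 0" and E0: "\<And>s. E s \<ge> 0"
    and \<rho>: "0 \<le> \<rho>" "\<rho> < 1"
    and H1: "\<And>s. D (s + Suc L') \<le> \<rho> * D s + 2 * (\<Sum>j<Suc L'. E (s+j))"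
    and H2: "\<And>s. D (Suc s) \<le> 3 * D s + cz * \<alpha> s" and cz: "cz \<ge> 0"
    and H3: "\<And>N. cy * (\<Sum>\<sigma><N. (E \<sigma>)\<^sup>2) \<le> Cz + (\<Sum>\<tau><N + Suc L'. \<alpha> \<tau> * D \<tau>)" and cy: "cy > 0"
  shows "D \<longlonglongrightarrow> 0"
proof -
  define L where "L = Suc L'"
  define SE where "SE N = (\<Sum>\<sigma><N. (E \<sigma>)\<^sup>2)" for N
  have SE0: "SE N \<ge> 0" for N by (simp add: SE_def sum_nonneg)
  define C' where "C' = 4 * L / (1 - \<rho>)"
  have C'0: "C' \<ge> 0" using \<rho> by (simp add: C'_def)
  have stepA: "(D (s + L))\<^sup>2 \<le> \<rho> * (D s)\<^sup>2 + C' * (\<Sum>j<L. (E (s+j))\<^sup>2)" for s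
  proof -
    have "(D (s + L))\<^sup>2 \<le> (\<rho> * D s + 2 * (\<Sum>j<L. E (s+j)))\<^sup>2"
      using H1[of s] D0 by (intro power_mono) (auto simp: L_def)
    also have "\<dots> \<le> \<rho> * (D s)\<^sup>2 + (2 * (\<Sum>j<L. E (s+j)))\<^sup>2 / (1 - \<rho>)" by (rule sq_comb[OF \<rho>])
    also have "(2 * (\<Sum>j<L. E (s+j)))\<^sup>2 \<le> 4 * (L * (\<Sum>j<L. (E (s+j))\<^sup>2))"
      using sum_sq_le_card[of "\<lambda>j. E (s+j)" L] by (simp add: power_mult_distrib)
    then have "(2 * (\<Sum>j<L. E (s+j)))\<^sup>2 / (1 - \<rho>) \<le> 4 * (L * (\<Sum>j<L. (E (s+j))\<^sup>2)) / (1 - \<rho>)"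
      using \<rho> by (intro divide_right_mono) auto
    finally show ?thesis by (simp add: C'_def)
  qed
  have A1: "(\<Sum>\<tau><N+L. (D \<tau>)\<^sup>2) \<le> (\<Sum>\<tau><L. (D \<tau>)\<^sup>2) + \<rho> * (\<Sum>s<N. (D s)\<^sup>2) + C' * (\<Sum>s<N. \<Sum>j<L. (E (s+j))\<^sup>2)" for N
  proof (induction N)
    case 0 then show ?case by simp
  next
    case (Suc N)
    have "(\<Sum>\<tau><Suc N+L. (D \<tau>)\<^sup>2) = (\<Sum>\<tau><N+L. (D \<tau>)\<^sup>2) + (D (N + L))\<^sup>2" by simp
    also have "\<dots> \<le> (\<Sum>\<tau><L. (D \<tau>)\<^sup>2) + \<rho> * (\<Sum>s<N. (D s)\<^sup>2) + C' * (\<Sum>s<N. \<Sum>j<L. (E (s+j))\<^sup>2)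
       + (\<rho> * (D N)\<^sup>2 + C' * (\<Sum>j<L. (E (N+j))\<^sup>2))"
      using Suc stepA[of N] by linarith
    finally show ?case by (simp add: algebra_simps)
  qed
  define P where "P = (\<Sum>\<tau><L. (D \<tau>)\<^sup>2)"
  have P0: "P \<ge> 0" by (simp add: P_def sum_nonneg)
  define KA where "KA = (P + C' * L) / (1 - \<rho>) + P"
  have stepA': "(\<Sum>\<tau><Suc M. (D \<tau>)\<^sup>2) \<le> KA * (1 + SE M)" for M
  proof (cases "M < L'")
    case True
    have "(\<Sum>\<tau><Suc M. (D \<tau>)\<^sup>2) \<le> P" unfolding P_def using True by (intro sum_mono2) (auto simp: L_def)
    also have "P \<le> KA * 1" using \<rho> P0 C'0 by (simp add: KA_def)
    also have "KA * 1 \<le> KA * (1 + SE M)" using SE0[of M] \<rho> P0 C'0 by (intro mult_left_mono) (auto simp: KA_def)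
    finally show ?thesis .
  next
    case False
    define N where "N = M - L'"
    have NL: "N + L = Suc M" "N + L' = M" using False by (auto simp: N_def L_def)
    have dsum: "(\<Sum>s<N. \<Sum>j<L. (E (s+j))\<^sup>2) \<le> L * SE M"
    proof -
      have "(\<Sum>s<N. \<Sum>j<Suc L'. (E (s+j))\<^sup>2) \<le> Suc L' * (\<Sum>\<sigma><N+L'. (E \<sigma>)\<^sup>2)"
        by (rule double_sum_shift) simp
      then show ?thesis unfolding L_def SE_def NL(2) .
    qed
    have sub: "(\<Sum>s<N. (D s)\<^sup>2) \<le> (\<Sum>\<tau><N+L. (D \<tau>)\<^sup>2)" by (intro sum_mono2) auto
    have "(\<Sum>\<tau><N+L. (D \<tau>)\<^sup>2) \<le> P + \<rho> * (\<Sum>\<tau><N+L. (D \<tau>)\<^sup>2) + C' * (L * SE M)"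
      using A1[of N] mult_left_mono[OF sub \<rho>(1)] mult_left_mono[OF dsum C'0] by (simp add: P_def)
    then have "(1 - \<rho>) * (\<Sum>\<tau><N+L. (D \<tau>)\<^sup>2) \<le> P + C' * L * SE M" by (simp add: algebra_simps)
    then have "(\<Sum>\<tau><N+L. (D \<tau>)\<^sup>2) \<le> (P + C' * L * SE M) / (1 - \<rho>)" using \<rho> by (simp add: field_simps)
    also have "\<dots> \<le> KA * (1 + SE M)"
    proof -
      have "(P + C' * L * SE M) \<le> (P + C' * L) * (1 + SE M)"
        using P0 C'0 SE0[of M] by (simp add: algebra_simps)
      then have "(P + C' * L * SE M) / (1 - \<rho>) \<le> ((P + C' * L) / (1 - \<rho>)) * (1 + SE M)"
        using \<rho> by (simp add: divide_right_mono)
      also have "\<dots> \<le> KA * (1 + SE M)" using P0 SE0[of M] by (intro mult_right_mono) (auto simp: KA_def)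
      finally show ?thesis .
    qed
    finally show ?thesis using NL by simp
  qed
  have KA0: "KA \<ge> 0" using \<rho> P0 C'0 by (simp add: KA_def)
  have amono: "\<alpha> s \<le> \<alpha> 0" for s using decseqD[OF decseq_SucI[of \<alpha>, OF \<alpha>mono], of 0 s] by simp
  define A0 where "A0 = cz * \<alpha> 0 / 2"
  have A00: "A0 \<ge> 0" using cz \<alpha>0[of 0] by (simp add: A0_def)
  have grow: "D (s + k) + A0 \<le> 3^k * (D s + A0)" for s k
  proof (induction k)
    case 0 then show ?case by simp
  next
    case (Suc k)
    have "D (s + Suc k) + A0 \<le> 3 * D (s+k) + cz * \<alpha> (s+k) + A0" using H2[of "s+k"] by simp
    also have "cz * \<alpha> (s+k) \<le> 2 * A0" using amono[of "s+k"] cz by (simp add: A0_def mult_left_mono)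
    then have "3 * D (s+k) + cz * \<alpha> (s+k) + A0 \<le> 3 * (D (s+k) + A0)" by simp
    also have "\<dots> \<le> 3 * (3^k * (D s + A0))" using Suc by simp
    finally show ?case by simp
  qed
  define KC where "KC = (1 + 2 * L' * 9^L) * KA + 2 * L' * 9^L * A0\<^sup>2 + 1"
  have KC1: "KC \<ge> 1" using KA0 by (simp add: KC_def)
  have stepC: "(\<Sum>\<tau><M+L. (D \<tau>)\<^sup>2) \<le> KC * (1 + SE M)" for M
  proof -
    have split: "(\<Sum>\<tau><M+L. (D \<tau>)\<^sup>2) = (\<Sum>\<tau><Suc M. (D \<tau>)\<^sup>2) + (\<Sum>k<L'. (D (M + Suc k))\<^sup>2)"
    proof -
      have "(\<Sum>\<tau><Suc M + k. (D \<tau>)\<^sup>2) = (\<Sum>\<tau><Suc M. (D \<tau>)\<^sup>2) + (\<Sum>k'<k. (D (M + Suc k'))\<^sup>2)" for k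
        by (induction k) auto
      from this[of L'] show ?thesis by (simp add: L_def)
    qed
    have each: "(D (M + Suc k))\<^sup>2 \<le> 2 * 9^L * ((D M)\<^sup>2 + A0\<^sup>2)" if k: "k < L'" for k
    proof -
      have "D (M + Suc k) \<le> 3^(Suc k) * (D M + A0)" using grow[of M "Suc k"] A00 by simp
      also have "\<dots> \<le> 3^L * (D M + A0)" using k D0[of M] A00 by (intro mult_right_mono power_increasing) (auto simp: L_def)
      finally have "(D (M + Suc k))\<^sup>2 \<le> (3^L * (D M + A0))\<^sup>2" using D0 by (intro power_mono) auto
      also have "\<dots> = 9^L * (D M + A0)\<^sup>2" by (simp add: power_mult_distrib power_mult[symmetric] mult.commute[of L] power_mult)
      also have "(D M + A0)\<^sup>2 \<le> 2 * ((D M)\<^sup>2 + A0\<^sup>2)"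
        using sum_sq_le_card[of "\<lambda>j. if j = 0 then D M else A0" 2] by (simp add: numeral_2_eq_2)
      then have "9^L * (D M + A0)\<^sup>2 \<le> 9^L * (2 * ((D M)\<^sup>2 + A0\<^sup>2))" by (intro mult_left_mono) auto
      finally show ?thesis by (simp add: algebra_simps)
    qed
    have "(\<Sum>k<L'. (D (M + Suc k))\<^sup>2) \<le> (\<Sum>k<L'. 2 * 9^L * ((D M)\<^sup>2 + A0\<^sup>2))"
      using each by (intro sum_mono) auto
    also have "\<dots> = 2 * L' * 9^L * ((D M)\<^sup>2 + A0\<^sup>2)" by simp
    also have "(D M)\<^sup>2 \<le> (\<Sum>\<tau><Suc M. (D \<tau>)\<^sup>2)" by (rule member_le_sum) auto
    then have "2 * L' * 9^L * ((D M)\<^sup>2 + A0\<^sup>2) \<le> 2 * L' * 9^L * ((\<Sum>\<tau><Suc M. (D \<tau>)\<^sup>2) + A0\<^sup>2)"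
      by (intro mult_left_mono) auto
    finally have "(\<Sum>\<tau><M+L. (D \<tau>)\<^sup>2) \<le> (1 + 2 * L' * 9^L) * (\<Sum>\<tau><Suc M. (D \<tau>)\<^sup>2) + 2 * L' * 9^L * A0\<^sup>2"
      using split by (simp add: algebra_simps)
    also have "\<dots> \<le> (1 + 2 * L' * 9^L) * (KA * (1 + SE M)) + 2 * L' * 9^L * A0\<^sup>2"
      using stepA'[of M] by (intro add_right_mono mult_left_mono) auto
    also have "\<dots> \<le> KC * (1 + SE M)"
    proof -
      have "2 * L' * 9^L * A0\<^sup>2 + 1 \<le> (2 * L' * 9^L * A0\<^sup>2 + 1) * (1 + SE M)"
        using SE0[of M] by (simp add: algebra_simps)
      then show ?thesis by (simp add: KC_def algebra_simps)
    qed
    finally show ?thesis .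
  qed
  define S\<alpha> where "S\<alpha> = suminf (\<lambda>s. (\<alpha> s)\<^sup>2)"
  define \<epsilon> where "\<epsilon> = cy / KC"
  have \<epsilon>: "\<epsilon> > 0" using cy KC1 by (simp add: \<epsilon>_def)
  define BE where "BE = 2 * (Cz + S\<alpha> / (2 * \<epsilon>)) / cy + 1"
  have SEb: "SE N \<le> BE" for N
  proof -
    have "(\<Sum>\<tau><N + L. \<alpha> \<tau> * D \<tau>) \<le> (\<Sum>\<tau><N + L. (\<alpha> \<tau>)\<^sup>2 / (2*\<epsilon>) + \<epsilon>/2 * (D \<tau>)\<^sup>2)"
      by (intro sum_mono amgm_eps \<epsilon>)
    also have "\<dots> = (\<Sum>\<tau><N + L. (\<alpha> \<tau>)\<^sup>2) / (2*\<epsilon>) + \<epsilon>/2 * (\<Sum>\<tau><N + L. (D \<tau>)\<^sup>2)"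
      by (simp add: sum.distrib sum_divide_distrib sum_distrib_left)
    also have "(\<Sum>\<tau><N + L. (\<alpha> \<tau>)\<^sup>2) \<le> S\<alpha>" unfolding S\<alpha>_def by (rule sum_le_suminf[OF \<alpha>2]) auto
    then have "(\<Sum>\<tau><N + L. (\<alpha> \<tau>)\<^sup>2) / (2*\<epsilon>) \<le> S\<alpha> / (2*\<epsilon>)" using \<epsilon> by (intro divide_right_mono) auto
    also have "\<epsilon>/2 * (\<Sum>\<tau><N + L. (D \<tau>)\<^sup>2) \<le> \<epsilon>/2 * (KC * (1 + SE N))" using stepC[of N] \<epsilon> by (intro mult_left_mono) auto
    also have "\<epsilon>/2 * (KC * (1 + SE N)) = cy / 2 * (1 + SE N)" using KC1 by (simp add: \<epsilon>_def)
    finally have "(\<Sum>\<tau><N + L. \<alpha> \<tau> * D \<tau>) \<le> S\<alpha> / (2*\<epsilon>) + cy / 2 * (1 + SE N)" by simp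
    then have "cy * SE N \<le> Cz + S\<alpha> / (2*\<epsilon>) + cy / 2 * (1 + SE N)" using H3[of N] by (simp add: SE_def L_def)
    then have "cy * SE N \<le> 2 * (Cz + S\<alpha> / (2*\<epsilon>)) + cy" by (simp add: field_simps)
    then show ?thesis using cy by (simp add: BE_def field_simps)
  qed
  have bnd: "(\<Sum>\<tau><n. (D \<tau>)\<^sup>2) \<le> KA * (1 + BE)" for n
  proof (cases n)
    case 0 then show ?thesis using KA0 SE0[of 0] SEb[of 0] by simp
  next
    case (Suc M)
    then show ?thesis using stepA'[of M] SEb[of M] KA0 by (smt (verit) mult_left_mono)
  qed
  have "summable (\<lambda>\<tau>. (D \<tau>)\<^sup>2)" by (rule summableI_nonneg_bounded[OF _ bnd]) simp
  then have "(\<lambda>\<tau>. (D \<tau>)\<^sup>2) \<longlonglongrightarrow> 0" by (rule summable_LIMSEQ_zero)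
  then have "(\<lambda>\<tau>. sqrt ((D \<tau>)\<^sup>2)) \<longlonglongrightarrow> sqrt 0" by (rule tendsto_real_sqrt)
  then show ?thesis using D0 by simp
qed

lemma inner_cvec: "inner (cvec :: (real^'n) \<times> (real^'m::finite)) p = (\<Sum>k\<in>UNIV. snd p $ k) / real CARD('m)"
  by (cases p) (simp add: cvec_def inner_vec_def sum_divide_distrib)

lemma norm_fst_diff: "norm (fst p - fst q) \<le> norm (p - q)"
  by (metis fst_diff norm_fst_le prod.collapse)

lemma norm_snd_comp_diff: "\<bar>snd p $ k - snd q $ k\<bar> \<le> norm (p - q)"
proof -
  have "\<bar>snd p $ k - snd q $ k\<bar> = \<bar>(snd (p - q)) $ k\<bar>" by simp
  also have "\<dots> \<le> norm (snd (p - q))" by (rule component_le_norm_cart)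
  also have "\<dots> \<le> norm (p - q)" by (metis norm_snd_le prod.collapse)
  finally show ?thesis .
qed

lemma f0_bound:
  fixes X :: "(real^'n) set" and f :: "'m::finite \<Rightarrow> real^'n \<Rightarrow> real"
    and g :: "'m \<Rightarrow> real^'n \<Rightarrow> real \<Rightarrow> real" and Yk :: "'m \<Rightarrow> real set" and eps :: "'m \<Rightarrow> real"
    and th :: "'m \<Rightarrow> (real^'n) \<times> (real^'m)"
  assumes convX: "convex X"
   and f_convex: "\<And>i. convex_on UNIV (f i)"
   and g_convex: "\<And>i y. y \<in> Yk i \<Longrightarrow> convex_on UNIV (\<lambda>x. g i x y)"
   and Lf: "\<And>k x x'. x\<in>X \<Longrightarrow> x'\<in>X \<Longrightarrow> \<bar>f k x - f k x'\<bar> \<le> Lf * norm (x - x')"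
   and Lg: "\<And>k y x x'. y \<in> Yk k \<Longrightarrow> x\<in>X \<Longrightarrow> x'\<in>X \<Longrightarrow> \<bar>g k x y - g k x' y\<bar> \<le> Lg * norm (x - x')"
   and Lg0: "Lg \<ge> 0" and Lf0: "Lf \<ge> 0"
   and Mf: "\<And>k x. x \<in> X \<Longrightarrow> \<bar>f k x\<bar> \<le> Mf"
   and xt: "xt \<in> X" "\<And>k y. y \<in> Yk k \<Longrightarrow> g k xt y \<le> - eps k - \<sigma>" and \<sigma>: "\<sigma> > 0"
   and xsopt: "\<And>x. x \<in> X \<Longrightarrow> (\<forall>k. \<forall>y\<in>Yk k. g k x y \<le> - eps k) \<Longrightarrow> (\<Sum>k\<in>UNIV. f k xs) \<le> (\<Sum>k\<in>UNIV. f k x)"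
   and th: "\<And>k. th k \<in> Omega_i X f g Yk eps k" and \<Delta>: "\<And>j k. norm (th j - th k) \<le> \<Delta>"
  shows "inner cvec (xs, \<chi> k. f k xs) - inner cvec (th j) \<le> (2*Mf*Lg/\<sigma> + Lf + 1) * \<Delta>"
proof -
  define m where "m = real CARD('m)"
  have m: "m > 0" by (simp add: m_def)
  have \<Delta>0: "\<Delta> \<ge> 0" using \<Delta>[of j j] by simp
  have thX: "fst (th k) \<in> X" for k using th[of k] by (auto simp: Omega_i_def split: prod.splits)
  have thf: "f k (fst (th k)) \<le> snd (th k) $ k" for k using th[of k] by (auto simp: Omega_i_def split: prod.splits)
  have thg: "g k (fst (th k)) y \<le> - eps k" if "y \<in> Yk k" for k y
    using th[of k] that by (auto simp: Omega_i_def split: prod.splits)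
  define x where "x = fst (th j)"
  have xX: "x \<in> X" using thX by (simp add: x_def)
  define s where "s = Lg * \<Delta>"
  have s0: "s \<ge> 0" using Lg0 \<Delta>0 by (simp add: s_def)
  have viol: "g k x y \<le> - eps k + s" if y: "y \<in> Yk k" for k y
  proof -
    have "\<bar>g k x y - g k (fst (th k)) y\<bar> \<le> Lg * norm (x - fst (th k))" by (rule Lg[OF y xX thX])
    also have "\<dots> \<le> Lg * \<Delta>" using Lg0 norm_fst_diff[where p="th j" and q="th k"] \<Delta>[of j k]
      by (intro mult_left_mono) (auto simp: x_def)
    finally show ?thesis using thg[OF y] by (simp add: s_def)
  qed
  define lam where "lam = s / (s + \<sigma>)"
  have lam: "0 \<le> lam" "lam \<le> 1" "lam \<le> s / \<sigma>" using s0 \<sigma> by (auto simp: lam_def field_simps)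
  have key: "(1 - lam) * s = lam * \<sigma>" using s0 \<sigma> by (simp add: lam_def field_simps)
  define x' where "x' = (1 - lam) *\<^sub>R x + lam *\<^sub>R xt"
  have x'X: "x' \<in> X" using convX xX xt(1) lam unfolding convex_alt x'_def by blast
  have x'feas: "\<forall>k. \<forall>y\<in>Yk k. g k x' y \<le> - eps k"
  proof (intro allI ballI)
    fix k y assume y: "y \<in> Yk k"
    have "g k x' y \<le> (1 - lam) * g k x y + lam * g k xt y"
      unfolding x'_def by (rule convex_onD[OF g_convex[OF y] lam(1,2)]) auto
    also have "\<dots> \<le> (1 - lam) * (- eps k + s) + lam * (- eps k - \<sigma>)"
      using viol[OF y] xt(2)[OF y] lam by (intro add_mono mult_left_mono) auto
    also have "\<dots> = - eps k + ((1 - lam) * s - lam * \<sigma>)" by (simp add: algebra_simps)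
    finally show "g k x' y \<le> - eps k" using key by simp
  qed
  have S2: "(\<Sum>k\<in>UNIV. f k xt - f k x) \<le> (\<Sum>k\<in>(UNIV::'m set). 2 * Mf)"
  proof (rule sum_mono)
    fix k show "f k xt - f k x \<le> 2 * Mf" using Mf[OF xt(1), of k] Mf[OF xX, of k] by linarith
  qed
  have Mf0: "0 \<le> Mf" using Mf[OF xX, of j] by linarith
  have S3: "lam * (\<Sum>k\<in>UNIV. f k xt - f k x) \<le> s / \<sigma> * (m * (2 * Mf))"
  proof -
    have "lam * (\<Sum>k\<in>UNIV. f k xt - f k x) \<le> lam * (m * (2 * Mf))"
      using lam S2 by (intro mult_left_mono) (auto simp: m_def)
    also have "\<dots> \<le> s / \<sigma> * (m * (2 * Mf))"
      using lam m Mf0 by (intro mult_right_mono) auto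
    finally show ?thesis .
  qed
  have "(\<Sum>k\<in>UNIV. f k xs) \<le> (\<Sum>k\<in>UNIV. f k x')" by (rule xsopt[OF x'X x'feas])
  also have "\<dots> \<le> (\<Sum>k\<in>UNIV. (1 - lam) * f k x + lam * f k xt)"
    unfolding x'_def by (intro sum_mono convex_onD[OF f_convex lam(1,2)]) auto
  also have "\<dots> = (\<Sum>k\<in>UNIV. f k x) + lam * (\<Sum>k\<in>UNIV. f k xt - f k x)"
    by (simp add: algebra_simps sum.distrib sum_distrib_left sum_subtractf)
  also have "\<dots> \<le> (\<Sum>k\<in>UNIV. f k x) + s / \<sigma> * (m * (2 * Mf))" using S3 by simp
  finally have A: "(\<Sum>k\<in>UNIV. f k xs) \<le> (\<Sum>k\<in>UNIV. f k x) + s / \<sigma> * (m * (2 * Mf))" .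
  have B: "(\<Sum>k\<in>UNIV. f k x - (Lf + 1) * \<Delta>) \<le> (\<Sum>k\<in>UNIV. snd (th j) $ k)"
  proof (intro sum_mono)
    fix k
    have "\<bar>f k x - f k (fst (th k))\<bar> \<le> Lf * norm (x - fst (th k))" by (rule Lf[OF xX thX])
    also have "Lf * norm (x - fst (th k)) \<le> Lf * \<Delta>"
      using Lf0 norm_fst_diff[where p="th j" and q="th k"] \<Delta>[of j k] by (intro mult_left_mono) (auto simp: x_def)
    finally have 1: "f k x \<le> f k (fst (th k)) + Lf * \<Delta>" by simp
    have 2: "snd (th k) $ k \<le> snd (th j) $ k + \<Delta>"
      using norm_snd_comp_diff[where p="th k" and q="th j" and k=k] \<Delta>[of k j] by simp
    show "f k x - (Lf + 1) * \<Delta> \<le> snd (th j) $ k" using 1 2 thf[of k] by (simp add: algebra_simps)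
  qed
  have B': "(\<Sum>k\<in>UNIV. f k x) - m * ((Lf + 1) * \<Delta>) \<le> (\<Sum>k\<in>UNIV. snd (th j) $ k)"
    using B by (simp add: sum_subtractf m_def)
  have "inner cvec (xs, \<chi> k. f k xs) - inner cvec (th j) = ((\<Sum>k\<in>UNIV. f k xs) - (\<Sum>k\<in>UNIV. snd (th j) $ k)) / m"
    by (simp add: inner_cvec m_def diff_divide_distrib)
  also have "\<dots> \<le> (s / \<sigma> * (m * (2 * Mf)) + m * ((Lf + 1) * \<Delta>)) / m"
    using A B' m by (intro divide_right_mono) auto
  also have "\<dots> = (2*Mf*Lg/\<sigma> + Lf + 1) * \<Delta>" using m by (simp add: s_def field_simps)
  finally show ?thesis .
qed

lemma Omega_closed:
  fixes X :: "(real^'n) set" and f :: "'m::finite \<Rightarrow> real^'n \<Rightarrow> real"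
  assumes X: "closed X" and fc: "convex_on UNIV (f i)" and gc: "\<And>y. y \<in> Yk i \<Longrightarrow> convex_on UNIV (\<lambda>x. g i x y)"
  shows "closed (Omega_i X f g Yk eps i)"
proof -
  have eq: "Omega_i X f g Yk eps i = (X \<times> UNIV) \<inter> {p. f i (fst p) - snd p $ i \<le> 0} \<inter> (\<Inter>y\<in>Yk i. {p. g i (fst p) y \<le> - eps i})"
    by (auto simp: Omega_i_def)
  have cf: "continuous_on UNIV (f i)" by (rule convex_on_continuous[OF open_UNIV fc])
  have c1: "continuous_on UNIV (\<lambda>p::(real^'n)\<times>(real^'m). f i (fst p) - snd p $ i)"
    by (intro continuous_intros continuous_on_compose2[OF cf]) auto
  have c2: "continuous_on UNIV (\<lambda>p::(real^'n)\<times>(real^'m). g i (fst p) y)" if "y \<in> Yk i" for y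
    by (intro continuous_on_compose2[OF convex_on_continuous[OF open_UNIV gc[OF that]]] continuous_intros) auto
  show ?thesis unfolding eq
    by (intro closed_Int closed_Times X closed_UNIV closed_INT ballI closed_Collect_le c1 c2 continuous_intros)
qed

lemma Omega_convex:
  fixes X :: "(real^'n) set" and f :: "'m::finite \<Rightarrow> real^'n \<Rightarrow> real"
  assumes X: "convex X" and fc: "convex_on UNIV (f i)" and gc: "\<And>y. y \<in> Yk i \<Longrightarrow> convex_on UNIV (\<lambda>x. g i x y)"
  shows "convex (Omega_i X f g Yk eps i)"
  unfolding convex_alt
proof (intro ballI allI impI)
  fix p q and u :: real assume p: "p \<in> Omega_i X f g Yk eps i" and q: "q \<in> Omega_i X f g Yk eps i" and u: "0 \<le> u \<and> u \<le> 1"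
  obtain xp up where pp: "p = (xp, up)" by (cases p)
  obtain xq uq where qq: "q = (xq, uq)" by (cases q)
  have P: "xp \<in> X" "f i xp - up $ i \<le> 0" "\<And>y. y \<in> Yk i \<Longrightarrow> g i xp y \<le> - eps i" using p pp by (auto simp: Omega_i_def)
  have Q: "xq \<in> X" "f i xq - uq $ i \<le> 0" "\<And>y. y \<in> Yk i \<Longrightarrow> g i xq y \<le> - eps i" using q qq by (auto simp: Omega_i_def)
  have "(1 - u) *\<^sub>R xp + u *\<^sub>R xq \<in> X" using X P(1) Q(1) u unfolding convex_alt by blast
  moreover have "f i ((1 - u) *\<^sub>R xp + u *\<^sub>R xq) \<le> (1 - u) * f i xp + u * f i xq"
    using u by (intro convex_onD[OF fc]) auto
  moreover have "(1 - u) * f i xp + u * f i xq \<le> (1 - u) * up $ i + u * uq $ i"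
    using u P(2) Q(2) by (intro add_mono mult_left_mono) auto
  moreover have "g i ((1 - u) *\<^sub>R xp + u *\<^sub>R xq) y \<le> - eps i" if y: "y \<in> Yk i" for y
  proof -
    have "g i ((1 - u) *\<^sub>R xp + u *\<^sub>R xq) y \<le> (1 - u) * g i xp y + u * g i xq y"
      using u by (intro convex_onD[OF gc[OF y]]) auto
    also have "\<dots> \<le> (1 - u) * (- eps i) + u * (- eps i)"
      using u P(3)[OF y] Q(3)[OF y] by (intro add_mono mult_left_mono) auto
    finally show ?thesis by (simp add: algebra_simps)
  qed
  ultimately show "(1 - u) *\<^sub>R p + u *\<^sub>R q \<in> Omega_i X f g Yk eps i"
    unfolding pp qq by (auto simp: Omega_i_def)
qed

lemma conv_diff:
  fixes x :: "'m::finite \<Rightarrow> 'a::real_normed_vector"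
  assumes p0: "\<And>j. p j \<ge> 0" and p1: "(\<Sum>j\<in>UNIV. p j) = 1"
    and q0: "\<And>j. q j \<ge> 0" and q1: "(\<Sum>j\<in>UNIV. q j) = 1"
    and \<Delta>: "\<And>j k. norm (x j - x k) \<le> \<Delta>"
  shows "norm ((\<Sum>j\<in>UNIV. p j *\<^sub>R x j) - (\<Sum>k\<in>UNIV. q k *\<^sub>R x k)) \<le> \<Delta>"
proof -
  have i1: "(\<Sum>k\<in>UNIV. (p j * q k) *\<^sub>R x j) = p j *\<^sub>R x j" for j
  proof -
    have "(\<Sum>k\<in>UNIV. (p j * q k) *\<^sub>R x j) = (\<Sum>k\<in>UNIV. p j * q k) *\<^sub>R x j" by (rule scaleR_sum_left[symmetric])
    also have "(\<Sum>k\<in>UNIV. p j * q k) = p j" by (simp only: sum_distrib_left[symmetric] q1 mult_1_right)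
    finally show ?thesis .
  qed
  have i2: "(\<Sum>j\<in>UNIV. (p j * q k) *\<^sub>R x k) = q k *\<^sub>R x k" for k
  proof -
    have "(\<Sum>j\<in>UNIV. (p j * q k) *\<^sub>R x k) = (\<Sum>j\<in>UNIV. p j * q k) *\<^sub>R x k" by (rule scaleR_sum_left[symmetric])
    also have "(\<Sum>j\<in>UNIV. p j * q k) = q k" by (simp only: sum_distrib_right[symmetric] p1 mult_1_left)
    finally show ?thesis .
  qed
  have e1: "(\<Sum>j\<in>UNIV. p j *\<^sub>R x j) = (\<Sum>j\<in>UNIV. \<Sum>k\<in>UNIV. (p j * q k) *\<^sub>R x j)"
    using i1 by simp
  have e2: "(\<Sum>k\<in>UNIV. q k *\<^sub>R x k) = (\<Sum>j\<in>UNIV. \<Sum>k\<in>UNIV. (p j * q k) *\<^sub>R x k)"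
    using i2 sum.swap[of "\<lambda>j k. (p j * q k) *\<^sub>R x k" UNIV UNIV] by simp
  have "(\<Sum>j\<in>UNIV. p j *\<^sub>R x j) - (\<Sum>k\<in>UNIV. q k *\<^sub>R x k) = (\<Sum>j\<in>UNIV. \<Sum>k\<in>UNIV. (p j * q k) *\<^sub>R (x j - x k))"
    unfolding e1 e2 by (simp only: sum_subtractf[symmetric] scaleR_diff_right)
  then have "norm ((\<Sum>j\<in>UNIV. p j *\<^sub>R x j) - (\<Sum>k\<in>UNIV. q k *\<^sub>R x k)) = norm (\<Sum>j\<in>UNIV. \<Sum>k\<in>UNIV. (p j * q k) *\<^sub>R (x j - x k))"
    by simp
  also have "\<dots> \<le> (\<Sum>j\<in>UNIV. norm (\<Sum>k\<in>UNIV. (p j * q k) *\<^sub>R (x j - x k)))" by (rule norm_sum)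
  also have "\<dots> \<le> (\<Sum>j\<in>UNIV. \<Sum>k\<in>UNIV. norm ((p j * q k) *\<^sub>R (x j - x k)))" by (intro sum_mono norm_sum)
  also have "\<dots> \<le> (\<Sum>j\<in>UNIV. \<Sum>k\<in>UNIV. (p j * q k) * \<Delta>)"
  proof (intro sum_mono)
    fix j k
    have "norm ((p j * q k) *\<^sub>R (x j - x k)) = (p j * q k) * norm (x j - x k)" using p0[of j] q0[of k] by simp
    also have "\<dots> \<le> (p j * q k) * \<Delta>" using p0[of j] q0[of k] \<Delta>[of j k] by (intro mult_left_mono) auto
    finally show "norm ((p j * q k) *\<^sub>R (x j - x k)) \<le> (p j * q k) * \<Delta>" .
  qed
  also have "\<dots> = \<Delta>"
  proof -
    have "(\<Sum>j\<in>UNIV. \<Sum>k\<in>UNIV. (p j * q k) * \<Delta>) = (\<Sum>j\<in>UNIV. p j * \<Delta>)"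
    proof (intro sum.cong refl)
      fix j
      have "(\<Sum>k\<in>UNIV. (p j * q k) * \<Delta>) = (p j * \<Delta>) * (\<Sum>k\<in>UNIV. q k)"
        by (simp add: sum_distrib_left algebra_simps)
      then show "(\<Sum>k\<in>UNIV. (p j * q k) * \<Delta>) = p j * \<Delta>" using q1 by simp
    qed
    also have "\<dots> = \<Delta>" by (simp only: sum_distrib_right[symmetric] p1 mult_1_left)
    finally show ?thesis .
  qed
  finally show ?thesis .
qed

lemma jensen_sq:
  fixes r :: "'m::finite \<Rightarrow> real"
  assumes a0: "\<And>j. a j \<ge> 0" and a1: "(\<Sum>j\<in>UNIV. a j) = 1"
  shows "(\<Sum>j\<in>UNIV. a j * r j)\<^sup>2 \<le> (\<Sum>j\<in>UNIV. a j * (r j)\<^sup>2)"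
proof -
  define m where "m = (\<Sum>j\<in>UNIV. a j * r j)"
  have "0 \<le> (\<Sum>j\<in>UNIV. a j * (r j - m)\<^sup>2)" by (intro sum_nonneg) (simp add: a0)
  also have "(\<Sum>j\<in>UNIV. a j * (r j - m)\<^sup>2) = (\<Sum>j\<in>UNIV. a j * (r j)\<^sup>2 - 2 * m * (a j * r j) + m\<^sup>2 * a j)"
    by (intro sum.cong refl) (simp add: power2_eq_square algebra_simps)
  also have "\<dots> = (\<Sum>j\<in>UNIV. a j * (r j)\<^sup>2) - 2 * m * (\<Sum>j\<in>UNIV. a j * r j) + m\<^sup>2 * (\<Sum>j\<in>UNIV. a j)"
    by (simp only: sum.distrib sum_subtractf sum_distrib_left)
  also have "\<dots> = (\<Sum>j\<in>UNIV. a j * (r j)\<^sup>2) - m\<^sup>2" by (simp add: a1 m_def[symmetric] power2_eq_square)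
  finally show ?thesis by (simp add: m_def)
qed

lemma exists_argmax: fixes h :: "'m::finite \<Rightarrow> real" shows "\<exists>k. \<forall>j. h j \<le> h k"
proof -
  have "Max (range h) \<in> range h" by (rule Max_in) auto
  then obtain k where k: "h k = Max (range h)" by (metis imageE)
  have "\<forall>j. h j \<le> Max (range h)" by (intro allI Max_ge) auto
  then show ?thesis using k by metis
qed

lemma exists_argmin: fixes h :: "'m::finite \<Rightarrow> real" shows "\<exists>k. \<forall>j. h k \<le> h j"
  using exists_argmax[of "\<lambda>j. - h j"] by auto

lemma contraction:
  fixes a :: "nat \<Rightarrow> 'm::finite \<Rightarrow> 'm \<Rightarrow> real" and E :: "nat \<Rightarrow> ('m \<times> 'm) set"
    and \<theta> e :: "nat \<Rightarrow> 'm \<Rightarrow> 'v::real_inner" and c :: 'v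
  assumes S: "S > 0" "\<And>t. strongly_connected_graph (\<Union>s\<in>{t..<t+S}. E s)"
    and anonneg: "\<And>t i j. a t i j \<ge> 0" and asum: "\<And>t i. (\<Sum>j\<in>UNIV. a t i j) = 1"
    and aedge: "\<And>t i j. (j,i) \<in> E t \<Longrightarrow> a t i j \<ge> \<gamma>" and aii: "\<And>t i. a t i i \<ge> \<gamma>"
    and \<gamma>: "0 < \<gamma>" "\<gamma> \<le> 1"
    and dyn: "\<And>\<tau> k. \<theta> (Suc \<tau>) k = (\<Sum>j\<in>UNIV. a \<tau> k j *\<^sub>R \<theta> \<tau> j) - \<alpha> \<tau> *\<^sub>R c + e \<tau> k"
    and Em: "\<And>\<tau> k. norm (e \<tau> k) \<le> Em \<tau>"
    and \<Delta>: "\<And>j k. norm (\<theta> s j - \<theta> s k) \<le> \<Delta>"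
    and n: "n \<ge> CARD('m) * S"
  shows "norm (\<theta> (s+n) i - \<theta> (s+n) l) \<le> (1 - \<gamma>^n) * \<Delta> + 2 * (\<Sum>\<tau><n. Em (s+\<tau>))"
proof (cases "\<theta> (s+n) i = \<theta> (s+n) l")
  case True
  have "0 \<le> \<Delta>" using \<Delta>[of i i] by simp
  moreover have "\<gamma>^n \<le> 1" using \<gamma> by (simp add: power_le_one)
  moreover have "0 \<le> (\<Sum>\<tau><n. Em (s+\<tau>))" using Em by (intro sum_nonneg) (meson norm_ge_zero order_trans)
  ultimately show ?thesis using True by simp
next
  case False
  define d where "d = \<theta> (s+n) i - \<theta> (s+n) l"
  have dn: "norm d > 0" using False by (simp add: d_def)
  define u where "u = d /\<^sub>R norm d"
  have nu: "norm u = 1" using dn by (simp add: u_def)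
  define y where "y \<tau> k = inner (\<theta> \<tau> k) u" for \<tau> k
  have ystep: "y (Suc \<tau>) k = (\<Sum>j\<in>UNIV. a \<tau> k j * y \<tau> j) - \<alpha> \<tau> * inner c u + inner (e \<tau> k) u" for \<tau> k
    by (simp add: y_def dyn inner_sum_left inner_diff_left inner_add_left)
  have ein: "inner (e \<tau> k) u \<le> Em \<tau>" for \<tau> k
    using norm_cauchy_schwarz[of "e \<tau> k" u] nu Em[of \<tau> k] by simp
  have ein2: "- inner (e \<tau> k) u \<le> Em \<tau>" for \<tau> k
    using norm_cauchy_schwarz[of "- e \<tau> k" u] nu Em[of \<tau> k] by simp
  obtain k1 where k1: "\<And>j. y s j \<le> y s k1" using exists_argmax[of "y s"] by blast
  obtain j0 where j0: "\<And>j. y s j0 \<le> y s j" using exists_argmin[of "y s"] by blast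
  have up: "y (s+n) i \<le> y s k1 + (\<Sum>\<tau><n. Em (s+\<tau>) - \<alpha> (s+\<tau>) * inner c u) - \<gamma>^n * (y s k1 - y s j0)"
  proof (rule spread[where y=y and b="\<lambda>\<tau>. Em \<tau> - \<alpha> \<tau> * inner c u" and a=a and E=E and jz=j0, OF S anonneg asum aedge aii \<gamma>(1) _ _ _ _ n])
    show "y (Suc (s + \<tau>)) k \<le> (\<Sum>j\<in>UNIV. a (s + \<tau>) k j * y (s + \<tau>) j) + (Em (s + \<tau>) - \<alpha> (s + \<tau>) * inner c u)" for \<tau> k
      using ystep[of "s+\<tau>" k] ein[of "s+\<tau>" k] by simp
  qed (use k1 j0 in auto)
  have lo: "- y (s+n) l \<le> - y s j0 + (\<Sum>\<tau><n. Em (s+\<tau>) + \<alpha> (s+\<tau>) * inner c u) - \<gamma>^n * 0"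
  proof (rule spread[where y="\<lambda>\<tau> k. - y \<tau> k" and b="\<lambda>\<tau>. Em \<tau> + \<alpha> \<tau> * inner c u" and a=a and E=E and jz=j0, OF S anonneg asum aedge aii \<gamma>(1) _ _ _ _ n])
    show "- y (Suc (s + \<tau>)) k \<le> (\<Sum>j\<in>UNIV. a (s + \<tau>) k j * - y (s + \<tau>) j) + (Em (s + \<tau>) + \<alpha> (s + \<tau>) * inner c u)" for \<tau> k
      using ystep[of "s+\<tau>" k] ein2[of "s+\<tau>" k] by (simp add: sum_negf)
  qed (use j0 in auto)
  have "norm d = y (s+n) i - y (s+n) l"
  proof -
    have "inner d u = inner d d / norm d" by (simp add: u_def divide_inverse mult.commute)
    also have "inner d d = (norm d)\<^sup>2" by (simp add: power2_norm_eq_inner)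
    finally have "inner d u = norm d" using dn by (simp add: power2_eq_square)
    moreover have "inner d u = y (s+n) i - y (s+n) l" by (simp add: y_def d_def inner_diff_left)
    ultimately show ?thesis by simp
  qed
  also have "\<dots> \<le> (1 - \<gamma>^n) * (y s k1 - y s j0) + ((\<Sum>\<tau><n. Em (s+\<tau>) - \<alpha> (s+\<tau>) * inner c u) + (\<Sum>\<tau><n. Em (s+\<tau>) + \<alpha> (s+\<tau>) * inner c u))"
    using up lo by (simp add: algebra_simps)
  also have "(\<Sum>\<tau><n. Em (s+\<tau>) - \<alpha> (s+\<tau>) * inner c u) + (\<Sum>\<tau><n. Em (s+\<tau>) + \<alpha> (s+\<tau>) * inner c u) = 2 * (\<Sum>\<tau><n. Em (s+\<tau>))"
    by (simp add: sum.distrib[symmetric] sum_distrib_left)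
  also have "(1 - \<gamma>^n) * (y s k1 - y s j0) \<le> (1 - \<gamma>^n) * \<Delta>"
  proof (rule mult_left_mono)
    have "y s k1 - y s j0 = inner (\<theta> s k1 - \<theta> s j0) u" by (simp add: y_def inner_diff_left)
    also have "\<dots> \<le> norm (\<theta> s k1 - \<theta> s j0) * norm u" by (rule norm_cauchy_schwarz)
    also have "\<dots> \<le> \<Delta>" using nu \<Delta> by simp
    finally show "y s k1 - y s j0 \<le> \<Delta>" .
    show "0 \<le> 1 - \<gamma>^n" using \<gamma> by (simp add: power_le_one)
  qed
  finally show ?thesis by (simp add: d_def)
qed

lemma telescope_shift:
  fixes Q :: "nat \<Rightarrow> real"
  shows "(\<Sum>s<N. Q s - Q (s+L)) = (\<Sum>j<L. Q j - Q (N+j))"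
proof (induction N)
  case 0 then show ?case by simp
next
  case (Suc N)
  have "(\<Sum>j<L. Q j - Q (Suc N + j)) = (\<Sum>j<L. Q j - Q (N+j)) + (\<Sum>j<L. Q (N+j) - Q (Suc N + j))"
    by (simp add: sum.distrib[symmetric])
  also have "(\<Sum>j<L. Q (N+j) - Q (Suc N + j)) = Q N - Q (N + L)"
    using sum_lessThan_telescope'[of "\<lambda>j. Q (N+j)" L] by simp
  finally show ?case using Suc by simp
qed

theorem corollary1:
  fixes X :: "(real^'n) set"
    and f :: "'m::finite \<Rightarrow> real^'n \<Rightarrow> real"
    and Y :: "'m \<Rightarrow> real set"
    and g :: "'m \<Rightarrow> real^'n \<Rightarrow> real \<Rightarrow> real"
    and Yk :: "'m \<Rightarrow> real set"
    and eps :: "'m \<Rightarrow> real"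
    and E :: "nat \<Rightarrow> ('m \<times> 'm) set"
    and a :: "nat \<Rightarrow> 'm \<Rightarrow> 'm \<Rightarrow> real"
    and \<alpha> :: "nat \<Rightarrow> real"
    and \<theta> :: "nat \<Rightarrow> 'm \<Rightarrow> (real^'n) \<times> (real^'m)"
  assumes X: "X \<noteq> {}" "compact X" "convex X"
    and f_convex: "\<And>i. convex_on UNIV (f i)"
    and Y: "\<And>i. Y i \<noteq> {} \<and> compact (Y i) \<and> convex (Y i)"
    and g_cont: "\<And>i. continuous_on (X \<times> Y i) (\<lambda>(x, y). g i x y)"
    and g_convex: "\<And>i y. y \<in> Y i \<Longrightarrow> convex_on UNIV (\<lambda>x. g i x y)"
    and Yk: "\<And>i. finite (Yk i) \<and> Yk i \<subseteq> Y i"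
    and eps: "\<And>i. eps i > 0"
    and interior_point: "\<exists>xt\<in>X. \<forall>i. \<forall>y\<in>Yk i. g i xt y < - eps i"
    and ujsc: "UJSC E"
    and weights: "weight_rules E a"
    and step_pos: "\<And>t. \<alpha> t > 0"
    and step_sum: "\<not> summable \<alpha>"
    and step_sq: "summable (\<lambda>t. (\<alpha> t)\<^sup>2)"
    and step_mono: "\<And>t. \<alpha> (Suc t) \<le> \<alpha> t"
    and dpg: "\<And>t i. \<theta> (Suc t) i =
                closest_point (Omega_i X f g Yk eps i)
                  ((\<Sum>j\<in>UNIV. a t i j *\<^sub>R \<theta> t j) - \<alpha> t *\<^sub>R cvec)"
  shows "(\<forall>e1 e2 e3. e1 > 0 \<longrightarrow> e2 > 0 \<longrightarrow> e3 > 0 \<longrightarrow>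
            (\<exists>T::nat. T \<ge> 1 \<and> (\<forall>t\<ge>T. \<forall>i j.
               norm (\<theta> t i - \<theta> t j) \<le> e1 \<and>
               norm (\<theta> t i - \<theta> (t - 1) i) \<le> e2 \<and>
               \<bar>(f i (fst (\<theta> t i)) - snd (\<theta> t i) $ i)
                 - (f i (fst (\<theta> (t - 1) i)) - snd (\<theta> (t - 1) i) $ i)\<bar> \<le> e3)))
         \<and> (\<forall>t\<ge>1. \<forall>i. \<theta> t i \<in> Omega_i X f g Yk eps i)"
proof -
  have W1: "\<And>t i j. (j, i) \<in> E t \<Longrightarrow> a t i j > 0" and W2: "\<And>t i j. (j, i) \<notin> E t \<Longrightarrow> a t i j = 0"
    and asum: "\<And>t i. (\<Sum>j\<in>UNIV. a t i j) = 1" and W4: "\<And>t i. (i, i) \<in> E t"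
    using weights unfolding weight_rules_def by blast+
  obtain \<gamma> where \<gamma>: "0 < \<gamma>" "\<gamma> < 1" and W5: "\<And>t i j. a t i j > 0 \<Longrightarrow> a t i j \<ge> \<gamma>"
    using weights unfolding weight_rules_def by blast
  have anonneg: "a t i j \<ge> 0" for t i j using W1[of j i t] W2[of j i t] by (cases "(j,i) \<in> E t") auto
  have aedge: "(j,i) \<in> E t \<Longrightarrow> a t i j \<ge> \<gamma>" for t i j using W1 W5 by blast
  have aii: "a t i i \<ge> \<gamma>" for t i using aedge W4 by blast
  obtain S where S: "S > 0" "\<And>t. strongly_connected_graph (\<Union>s\<in>{t..<t+S}. E s)"
    using ujsc unfolding UJSC_def by blast
  define Om where "Om i = Omega_i X f g Yk eps i" for i
  have closedX: "closed X" using X(2) by (rule compact_imp_closed)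
  have gcK: "\<And>y. y \<in> Yk i \<Longrightarrow> convex_on UNIV (\<lambda>x. g i x y)" for i using g_convex Yk by blast
  have closedOm: "closed (Om i)" for i unfolding Om_def by (rule Omega_closed[OF closedX f_convex gcK])
  have convexOm: "convex (Om i)" for i unfolding Om_def by (rule Omega_convex[OF X(3) f_convex gcK])
  have "\<forall>k. \<exists>L\<ge>0. \<forall>x\<in>X. \<forall>y\<in>X. \<bar>f k x - f k y\<bar> \<le> L * norm (x - y)"
    using convex_lipschitz_compact[OF f_convex X(2)] by blast
  then obtain Lfk where Lfk: "\<And>k. Lfk k \<ge> 0" "\<And>k x y. x\<in>X \<Longrightarrow> y\<in>X \<Longrightarrow> \<bar>f k x - f k y\<bar> \<le> Lfk k * norm (x - y)"
    by metis
  define Lf where "Lf = (\<Sum>k\<in>UNIV. Lfk k)"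
  have Lf0: "Lf \<ge> 0" using Lfk by (simp add: Lf_def sum_nonneg)
  have Lf: "\<bar>f k x - f k x'\<bar> \<le> Lf * norm (x - x')" if "x\<in>X" "x'\<in>X" for k x x'
  proof -
    have "Lfk k \<le> Lf" unfolding Lf_def by (rule member_le_sum) (use Lfk in auto)
    then show ?thesis using Lfk(2)[OF that, of k] by (meson mult_right_mono norm_ge_zero order_trans)
  qed
  have "\<forall>k y. \<exists>L\<ge>0. y \<in> Yk k \<longrightarrow> (\<forall>x\<in>X. \<forall>x'\<in>X. \<bar>g k x y - g k x' y\<bar> \<le> L * norm (x - x'))"
    using convex_lipschitz_compact[OF gcK X(2)] by blast
  then obtain Lgk where Lgk: "\<And>k y. Lgk k y \<ge> 0"
      "\<And>k y x x'. y \<in> Yk k \<Longrightarrow> x\<in>X \<Longrightarrow> x'\<in>X \<Longrightarrow> \<bar>g k x y - g k x' y\<bar> \<le> Lgk k y * norm (x - x')"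
    by metis
  define Lg where "Lg = (\<Sum>k\<in>UNIV. \<Sum>y\<in>Yk k. Lgk k y)"
  have Lg0: "Lg \<ge> 0" using Lgk by (simp add: Lg_def sum_nonneg)
  have Lg: "\<bar>g k x y - g k x' y\<bar> \<le> Lg * norm (x - x')" if "y \<in> Yk k" "x\<in>X" "x'\<in>X" for k y x x'
  proof -
    have "Lgk k y \<le> (\<Sum>y\<in>Yk k. Lgk k y)" by (rule member_le_sum) (use Lgk that Yk in auto)
    also have "\<dots> \<le> Lg" unfolding Lg_def by (rule member_le_sum) (use Lgk in \<open>auto intro: sum_nonneg\<close>)
    finally show ?thesis using Lgk(2)[OF that] by (meson mult_right_mono norm_ge_zero order_trans)
  qed
  have "\<forall>k. \<exists>B\<ge>0. \<forall>x\<in>X. \<bar>f k x\<bar> \<le> B"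
  proof
    fix k
    have "continuous_on X (f k)"
      using convex_on_continuous[OF open_UNIV f_convex[of k]] continuous_on_subset by blast
    then have "bounded (f k ` X)" using X(2) by (simp add: compact_continuous_image compact_imp_bounded)
    then obtain B where "\<forall>x\<in>X. norm (f k x) \<le> B" unfolding bounded_iff by auto
    then show "\<exists>B\<ge>0. \<forall>x\<in>X. \<bar>f k x\<bar> \<le> B" by (intro exI[of _ "max B 0"]) auto
  qed
  then obtain Mk where Mk: "\<And>k. Mk k \<ge> 0" "\<And>k x. x \<in> X \<Longrightarrow> \<bar>f k x\<bar> \<le> Mk k" by metis
  define Mf where "Mf = (\<Sum>k\<in>UNIV. Mk k)"
  have Mf: "\<bar>f k x\<bar> \<le> Mf" if "x \<in> X" for k x
  proof -
    have "Mk k \<le> Mf" unfolding Mf_def by (rule member_le_sum) (use Mk in auto)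
    then show ?thesis using Mk(2)[OF that, of k] by linarith
  qed
  have Mf0: "Mf \<ge> 0" using Mk by (simp add: Mf_def sum_nonneg)
  obtain xt where xt: "xt \<in> X" "\<And>i y. y \<in> Yk i \<Longrightarrow> g i xt y < - eps i" using interior_point by blast
  define SL where "SL = insert 1 (\<Union>k. (\<lambda>y. - eps k - g k xt y) ` Yk k)"
  have finSL: "finite SL" using Yk by (simp add: SL_def)
  define \<sigma> where "\<sigma> = Min SL"
  have \<sigma>0: "\<sigma> > 0" unfolding \<sigma>_def using finSL xt(2) by (subst Min_gr_iff) (auto simp: SL_def)
  have \<sigma>: "g k xt y \<le> - eps k - \<sigma>" if "y \<in> Yk k" for k y
  proof -
    have "\<sigma> \<le> - eps k - g k xt y" unfolding \<sigma>_def using finSL that by (intro Min_le) (auto simp: SL_def)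
    then show ?thesis by linarith
  qed
  define F where "F = X \<inter> (\<Inter>k. \<Inter>y\<in>Yk k. {x. g k x y \<le> - eps k})"
  have "closed (\<Inter>k. \<Inter>y\<in>Yk k. {x. g k x y \<le> - eps k})"
    by (intro closed_INT ballI closed_Collect_le convex_on_continuous[OF open_UNIV gcK] continuous_intros)
  then have compF: "compact F" unfolding F_def using X(2) by (rule compact_Int_closed[rotated])
  have xtF: "xt \<in> F" using xt by (auto simp: F_def less_imp_le)
  have "continuous_on F (\<lambda>x. \<Sum>k\<in>UNIV. f k x)"
    by (intro continuous_on_sum continuous_on_subset[OF convex_on_continuous[OF open_UNIV f_convex]]) auto
  then obtain xs where xs: "xs \<in> F" "\<And>x. x \<in> F \<Longrightarrow> (\<Sum>k\<in>UNIV. f k xs) \<le> (\<Sum>k\<in>UNIV. f k x)"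
    using continuous_attains_inf[OF compF] xtF by blast
  have xsopt: "(\<Sum>k\<in>UNIV. f k xs) \<le> (\<Sum>k\<in>UNIV. f k x)" if "x \<in> X" "\<forall>k. \<forall>y\<in>Yk k. g k x y \<le> - eps k" for x
    using xs(2) that by (auto simp: F_def)
  define z where "z = (xs, \<chi> k. f k xs)"
  have zOm: "z \<in> Om k" for k using xs(1) by (auto simp: z_def Om_def Omega_i_def F_def)
  have OmNE: "Om k \<noteq> {}" for k using zOm by blast
  define K1 where "K1 = 2*Mf*Lg/\<sigma> + Lf + 1"
  have K1: "K1 \<ge> 1" using Mf0 Lg0 Lf0 \<sigma>0 by (simp add: K1_def)
  have f0b: "inner cvec z - inner cvec (th j) \<le> K1 * \<Delta>"
    if "\<And>k. th k \<in> Om k" "\<And>j k. norm (th j - th k) \<le> \<Delta>" for th \<Delta> j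
    unfolding z_def K1_def
    by (rule f0_bound[OF X(3) f_convex gcK Lf Lg Lg0 Lf0 Mf xt(1) \<sigma> \<sigma>0 xsopt that[unfolded Om_def]])
  define cc where "cc = (cvec :: (real^'n) \<times> (real^'m))"
  define w where "w t i = (\<Sum>j\<in>UNIV. a t i j *\<^sub>R \<theta> t j)" for t i
  define v where "v t i = w t i - \<alpha> t *\<^sub>R cc" for t i
  define e where "e t i = \<theta> (Suc t) i - v t i" for t i
  have thP: "\<theta> (Suc t) i = closest_point (Om i) (v t i)" for t i using dpg by (simp add: Om_def v_def w_def cc_def)
  have dyn: "\<theta> (Suc t) k = (\<Sum>j\<in>UNIV. a t k j *\<^sub>R \<theta> t j) - \<alpha> t *\<^sub>R cc + e t k" for t k
    by (simp add: e_def v_def w_def)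
  have inOm: "\<theta> t i \<in> Om i" if t1: "t \<ge> 1" for t i
  proof -
    obtain t' where "t = Suc t'" using t1 by (cases t) auto
    have "\<theta> (Suc t') i \<in> Om i" unfolding thP by (rule closest_point_in_set[OF closedOm OmNE])
    then show ?thesis using \<open>t = Suc t'\<close> by simp
  qed
  define Dm where "Dm t = Max (range (\<lambda>p::'m\<times>'m. norm (\<theta> t (fst p) - \<theta> t (snd p))))" for t
  have Dle: "norm (\<theta> t i - \<theta> t j) \<le> Dm t" for t i j
    unfolding Dm_def by (rule Max_ge) (auto intro: image_eqI[where x="(i,j)"])
  have Dm0: "Dm t \<ge> 0" for t using Dle[of t undefined undefined] by simp
  have Dleast: "Dm t \<le> c" if "\<And>i j. norm (\<theta> t i - \<theta> t j) \<le> c" for t c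
    unfolding Dm_def using that by (subst Max_le_iff) auto
  define Em where "Em t = Max (range (\<lambda>i. norm (e t i)))" for t
  have Ele: "norm (e t i) \<le> Em t" for t i unfolding Em_def by (rule Max_ge) auto
  have Em0: "Em t \<ge> 0" for t using Ele[of t undefined] by (meson norm_ge_zero order_trans)
  obtain jm where jm: "\<And>t. Em t = norm (e t (jm t))"
  proof -
    have "\<forall>t. \<exists>j. Em t = norm (e t j)"
    proof
      fix t
      have "Em t \<in> range (\<lambda>i. norm (e t i))" unfolding Em_def by (rule Max_in) auto
      then show "\<exists>j. Em t = norm (e t j)" by auto
    qed
    then show ?thesis using that by metis
  qed
  define nc where "nc = norm cc"
  have wdiff: "norm (w t i - w t l) \<le> Dm t" for t i l
    unfolding w_def by (rule conv_diff[OF anonneg asum anonneg asum Dle])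
  have wself: "norm (w t i - \<theta> t i) \<le> Dm t" for t i
  proof -
    have "(\<Sum>k\<in>UNIV. (if k = i then 1 else 0) *\<^sub>R \<theta> t k) = \<theta> t i"
    proof -
      have "(\<Sum>k\<in>UNIV. (if k = i then 1 else 0) *\<^sub>R \<theta> t k) = (\<Sum>k\<in>UNIV. if k = i then \<theta> t k else 0)"
        by (intro sum.cong) auto
      then show ?thesis by simp
    qed
    moreover have "norm ((\<Sum>j\<in>UNIV. a t i j *\<^sub>R \<theta> t j) - (\<Sum>k\<in>UNIV. (if k = i then 1 else 0) *\<^sub>R \<theta> t k)) \<le> Dm t"
      by (rule conv_diff[OF anonneg asum _ _ Dle]) auto
    ultimately show ?thesis by (simp add: w_def)
  qed
  have Ebound: "norm (e t i) \<le> Dm t + \<alpha> t * nc" if "t \<ge> 1" for t i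
  proof -
    have "norm (e t i) = dist (v t i) (closest_point (Om i) (v t i))"
      by (simp add: e_def thP dist_norm norm_minus_commute)
    also have "\<dots> \<le> dist (v t i) (\<theta> t i)" by (rule closest_point_le[OF closedOm inOm[OF that]])
    also have "\<dots> = norm ((w t i - \<theta> t i) - \<alpha> t *\<^sub>R cc)" by (simp add: dist_norm v_def algebra_simps)
    also have "\<dots> \<le> norm (w t i - \<theta> t i) + norm (\<alpha> t *\<^sub>R cc)" by (metis norm_triangle_ineq4)
    also have "\<dots> \<le> Dm t + \<alpha> t * nc" using wself step_pos[of t] by (simp add: nc_def less_imp_le)
    finally show ?thesis .
  qed
  have Emb: "Em t \<le> Dm t + \<alpha> t * nc" if "t \<ge> 1" for t using jm Ebound[OF that] by metis
  have H2: "Dm (Suc t) \<le> 3 * Dm t + 2 * nc * \<alpha> t" if "t \<ge> 1" for t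
  proof (rule Dleast)
    fix i l
    have eq: "\<theta> (Suc t) i - \<theta> (Suc t) l = (w t i - w t l) + (e t i - e t l)"
      unfolding dyn w_def by (simp add: algebra_simps)
    have n1: "norm ((w t i - w t l) + (e t i - e t l)) \<le> norm (w t i - w t l) + norm (e t i - e t l)"
      by (rule norm_triangle_ineq)
    have n2: "norm (e t i - e t l) \<le> norm (e t i) + norm (e t l)" by (metis norm_triangle_ineq4)
    have "norm (\<theta> (Suc t) i - \<theta> (Suc t) l) \<le> norm (w t i - w t l) + (norm (e t i) + norm (e t l))"
      unfolding eq using n1 n2 by linarith
    also have "\<dots> \<le> Dm t + ((Dm t + \<alpha> t * nc) + (Dm t + \<alpha> t * nc))"
      by (intro add_mono wdiff Ebound that)
    finally show "norm (\<theta> (Suc t) i - \<theta> (Suc t) l) \<le> 3 * Dm t + 2 * nc * \<alpha> t" by (simp add: algebra_simps)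
  qed
  define L where "L = Suc (CARD('m) * S)"
  have H1: "Dm (s + L) \<le> (1 - \<gamma>^L) * Dm s + 2 * (\<Sum>\<tau><L. Em (s+\<tau>))" for s
  proof (rule Dleast)
    fix i l
    show "norm (\<theta> (s + L) i - \<theta> (s + L) l) \<le> (1 - \<gamma>^L) * Dm s + 2 * (\<Sum>\<tau><L. Em (s+\<tau>))"
      by (rule contraction[where a=a and E=E and e=e and \<alpha>=\<alpha> and c=cc, OF S anonneg asum aedge aii \<gamma>(1) _ dyn Ele Dle])
        (use \<gamma> in \<open>auto simp: L_def\<close>)
  qed
  define W where "W t i = (norm (\<theta> t i - z))\<^sup>2" for t i
  define r where "r t = 2 * \<alpha> t * K1 * Dm t + (\<alpha> t)\<^sup>2 * nc\<^sup>2" for t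
  have Winq: "W (Suc t) i \<le> (\<Sum>j\<in>UNIV. a t i j * W t j) + r t - (norm (e t i))\<^sup>2" if t1: "t \<ge> 1" for t i
  proof -
    have pj: "(norm (\<theta> (Suc t) i - z))\<^sup>2 + (norm (\<theta> (Suc t) i - v t i))\<^sup>2 \<le> (norm (v t i - z))\<^sup>2"
      unfolding thP by (rule proj_ineq[OF convexOm closedOm zOm])
    have ee: "\<theta> (Suc t) i - v t i = e t i" by (simp add: e_def)
    have wz: "w t i - z = (\<Sum>j\<in>UNIV. a t i j *\<^sub>R (\<theta> t j - z))"
    proof -
      have "(\<Sum>j\<in>UNIV. a t i j *\<^sub>R (\<theta> t j - z)) = w t i - (\<Sum>j\<in>UNIV. a t i j) *\<^sub>R z"
        by (simp add: w_def scaleR_diff_right sum_subtractf scaleR_sum_left)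
      then show ?thesis using asum by simp
    qed
    have nwz: "norm (w t i - z) \<le> (\<Sum>j\<in>UNIV. a t i j * norm (\<theta> t j - z))"
    proof -
      have "norm (w t i - z) \<le> (\<Sum>j\<in>UNIV. norm (a t i j *\<^sub>R (\<theta> t j - z)))" unfolding wz by (rule norm_sum)
      also have "\<dots> = (\<Sum>j\<in>UNIV. a t i j * norm (\<theta> t j - z))" using anonneg by simp
      finally show ?thesis .
    qed
    have sq1: "(norm (w t i - z))\<^sup>2 \<le> (\<Sum>j\<in>UNIV. a t i j * W t j)"
    proof -
      have "(norm (w t i - z))\<^sup>2 \<le> (\<Sum>j\<in>UNIV. a t i j * norm (\<theta> t j - z))\<^sup>2"
        using nwz by (intro power_mono) auto
      also have "\<dots> \<le> (\<Sum>j\<in>UNIV. a t i j * (norm (\<theta> t j - z))\<^sup>2)" by (rule jensen_sq[OF anonneg asum])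
      finally show ?thesis by (simp add: W_def)
    qed
    have inn: "inner (w t i - z) cc \<ge> - K1 * Dm t"
    proof -
      have "inner (w t i - z) cc = (\<Sum>j\<in>UNIV. a t i j * inner (\<theta> t j - z) cc)"
        unfolding wz by (simp add: inner_sum_left)
      also have "\<dots> \<ge> (\<Sum>j\<in>UNIV. a t i j * (- K1 * Dm t))"
      proof (intro sum_mono mult_left_mono anonneg)
        fix j
        have "inner cvec z - inner cvec (\<theta> t j) \<le> K1 * Dm t" by (rule f0b[OF inOm[OF t1] Dle])
        then show "- K1 * Dm t \<le> inner (\<theta> t j - z) cc" by (simp add: cc_def inner_diff_right inner_commute[of _ cvec])
      qed
      also have "(\<Sum>j\<in>UNIV. a t i j * (- K1 * Dm t)) = - K1 * Dm t"
        using asum[of t i] by (simp only: sum_distrib_right[symmetric] mult_1_left)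
      finally show ?thesis .
    qed
    have vz: "v t i - z = (w t i - z) - \<alpha> t *\<^sub>R cc" by (simp add: v_def algebra_simps)
    have dn: "inner (w t i - z) (\<alpha> t *\<^sub>R cc) = ((norm (w t i - z))\<^sup>2 + (norm (\<alpha> t *\<^sub>R cc))\<^sup>2 - (norm ((w t i - z) - \<alpha> t *\<^sub>R cc))\<^sup>2) / 2"
      by (rule dot_norm_neg)
    have nB: "(norm (\<alpha> t *\<^sub>R cc))\<^sup>2 = (\<alpha> t)\<^sup>2 * nc\<^sup>2" by (simp add: nc_def power_mult_distrib)
    have iB: "inner (w t i - z) (\<alpha> t *\<^sub>R cc) = \<alpha> t * inner (w t i - z) cc" by simp
    have ex: "(norm (v t i - z))\<^sup>2 = (norm (w t i - z))\<^sup>2 - 2 * (\<alpha> t * inner (w t i - z) cc) + (\<alpha> t)\<^sup>2 * nc\<^sup>2"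
    proof -
      have "2 * inner (w t i - z) (\<alpha> t *\<^sub>R cc) = (norm (w t i - z))\<^sup>2 + (norm (\<alpha> t *\<^sub>R cc))\<^sup>2 - (norm ((w t i - z) - \<alpha> t *\<^sub>R cc))\<^sup>2"
        using dn by simp
      then show ?thesis unfolding vz using nB iB by linarith
    qed
    have m2: "2 * \<alpha> t * (- K1 * Dm t) \<le> 2 * \<alpha> t * inner (w t i - z) cc"
      using step_pos[of t] inn by (intro mult_left_mono) auto
    have r2: "r t = 2 * \<alpha> t * K1 * Dm t + (\<alpha> t)\<^sup>2 * nc\<^sup>2" by (simp add: r_def)
    have "(norm (v t i - z))\<^sup>2 \<le> (\<Sum>j\<in>UNIV. a t i j * W t j) + r t"
      using ex m2 sq1 r2 by (simp add: algebra_simps)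
    moreover have "W (Suc t) i + (norm (e t i))\<^sup>2 \<le> (norm (v t i - z))\<^sup>2" using pj[unfolded ee] by (simp add: W_def)
    ultimately show ?thesis by linarith
  qed
  define Mx where "Mx t = Max (range (W t))" for t
  have Wle: "W t i \<le> Mx t" for t i unfolding Mx_def by (rule Max_ge) auto
  have Mx0: "Mx t \<ge> 0" for t using Wle[of t undefined] by (simp add: W_def) (meson order_trans zero_le_power2)
  have Mxleast: "Mx t \<le> c" if "\<And>i. W t i \<le> c" for t c unfolding Mx_def using that by (subst Max_le_iff) auto
  have aW: "(\<Sum>j\<in>UNIV. a t i j * W t j) \<le> Mx t" for t i
  proof -
    have "(\<Sum>j\<in>UNIV. a t i j * W t j) \<le> (\<Sum>j\<in>UNIV. a t i j * Mx t)" by (intro sum_mono mult_left_mono Wle anonneg)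
    also have "\<dots> = Mx t" using asum by (simp add: sum_distrib_right[symmetric])
    finally show ?thesis .
  qed
  have Mstep: "Mx (Suc t) \<le> Mx t + r t" if t1: "t \<ge> 1" for t
  proof (rule Mxleast)
    fix i show "W (Suc t) i \<le> Mx t + r t" using Winq[OF t1, of i] aW[of t i] zero_le_power2[of "norm (e t i)"] by linarith
  qed
  have window: "Mx (t + L) \<le> Mx t + (\<Sum>\<tau><L. r (t+\<tau>)) - \<gamma>^(CARD('m) * S) * (Em t)\<^sup>2" if t1: "t \<ge> 1" for t
  proof (rule Mxleast)
    fix i
    have "W (Suc t + CARD('m) * S) i \<le> (Mx t + r t) + (\<Sum>\<tau><CARD('m) * S. r (Suc t + \<tau>)) - \<gamma>^(CARD('m) * S) * (Em t)\<^sup>2"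
    proof (rule spread[where y=W and b=r and a=a and E=E and jz="jm t", OF S anonneg asum aedge aii \<gamma>(1)])
      show "W (Suc (Suc t + \<tau>)) k \<le> (\<Sum>j\<in>UNIV. a (Suc t + \<tau>) k j * W (Suc t + \<tau>) j) + r (Suc t + \<tau>)" for \<tau> k
      proof -
        have "Suc t + \<tau> \<ge> 1" by simp
        from Winq[OF this, of k] show ?thesis using zero_le_power2[of "norm (e (Suc t + \<tau>) k)"] by linarith
      qed
      show "W (Suc t) k \<le> Mx t + r t" for k using Winq[OF t1, of k] aW[of t k] zero_le_power2[of "norm (e t k)"] by linarith
      show "W (Suc t) (jm t) \<le> Mx t + r t - (Em t)\<^sup>2" using Winq[OF t1, of "jm t"] aW[of t "jm t"] jm[of t] by simp
    qed auto
    also have "(Mx t + r t) + (\<Sum>\<tau><CARD('m) * S. r (Suc t + \<tau>)) = Mx t + (\<Sum>\<tau><L. r (t+\<tau>))"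
      unfolding L_def sum.lessThan_Suc_shift by simp
    finally show "W (t + L) i \<le> Mx t + (\<Sum>\<tau><L. r (t+\<tau>)) - \<gamma>^(CARD('m) * S) * (Em t)\<^sup>2"
      by (simp add: L_def)
  qed
  have split_sum: "(\<Sum>\<tau><m+n. f \<tau>) = (\<Sum>\<tau><m. f \<tau>) + (\<Sum>\<tau><n. f (m+\<tau>))" for f :: "nat \<Rightarrow> real" and m n
    by (induction n) auto
  define L' where "L' = CARD('m) * S"
  have LL: "L = Suc L'" by (simp add: L_def L'_def)
  have Lnat: "L \<ge> 1" by (simp add: LL)
  have Lr: "real L \<ge> 1" using Lnat by simp
  define \<rho> where "\<rho> = 1 - \<gamma>^L"
  have \<rho>: "0 \<le> \<rho>" "\<rho> < 1" using \<gamma> by (auto simp: \<rho>_def power_le_one)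
  define Q where "Q s = Mx (Suc s) - (\<Sum>\<tau><s. r (Suc \<tau>))" for s
  have Qstep: "Q (Suc s) \<le> Q s" for s using Mstep[of "Suc s"] by (simp add: Q_def)
  have Qmono: "Q s' \<le> Q s" if "s \<le> s'" for s s' using decseqD[OF decseq_SucI[of Q, OF Qstep] that] .
  have Qwin: "Q (s + L) \<le> Q s - \<gamma>^L' * (Em (Suc s))\<^sup>2" for s
  proof -
    have "Mx (Suc s + L) \<le> Mx (Suc s) + (\<Sum>\<tau><L. r (Suc s+\<tau>)) - \<gamma>^L' * (Em (Suc s))\<^sup>2"
      using window[of "Suc s"] by (simp add: L'_def)
    moreover have "(\<Sum>\<tau><s + L. r (Suc \<tau>)) = (\<Sum>\<tau><s. r (Suc \<tau>)) + (\<Sum>\<tau><L. r (Suc s+\<tau>))"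
      using split_sum[of "\<lambda>\<tau>. r (Suc \<tau>)" s L] by simp
    ultimately show ?thesis by (simp add: Q_def)
  qed
  define S\<alpha> where "S\<alpha> = suminf (\<lambda>s. (\<alpha> (Suc s))\<^sup>2)"
  have sq': "summable (\<lambda>s. (\<alpha> (Suc s))\<^sup>2)" using summable_Suc_iff[of "\<lambda>s. (\<alpha> s)\<^sup>2"] step_sq by simp
  have H3: "(\<gamma>^L' / (2 * L * K1)) * (\<Sum>\<sigma><N. (Em (Suc \<sigma>))\<^sup>2)
      \<le> (Mx 1 + nc\<^sup>2 * S\<alpha>) / (2 * K1) + (\<Sum>\<tau><N + Suc L'. \<alpha> (Suc \<tau>) * Dm (Suc \<tau>))" for N
  proof -
    have "\<gamma>^L' * (\<Sum>\<sigma><N. (Em (Suc \<sigma>))\<^sup>2) = (\<Sum>\<sigma><N. \<gamma>^L' * (Em (Suc \<sigma>))\<^sup>2)" by (simp add: sum_distrib_left)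
    also have "\<dots> \<le> (\<Sum>\<sigma><N. Q \<sigma> - Q (\<sigma> + L))" by (intro sum_mono) (use Qwin in \<open>smt (verit)\<close>)
    also have "\<dots> = (\<Sum>j<L. Q j - Q (N+j))" by (rule telescope_shift)
    also have "\<dots> \<le> (\<Sum>j<L. Q 0 - Q (N+L))" by (intro sum_mono diff_mono Qmono) auto
    also have "\<dots> = L * (Q 0 - Q (N+L))" by simp
    also have "Q 0 - Q (N+L) \<le> Mx 1 + (\<Sum>\<tau><N+L. r (Suc \<tau>))" using Mx0[of "Suc (N+L)"] by (simp add: Q_def)
    also have "(\<Sum>\<tau><N+L. r (Suc \<tau>)) = 2 * K1 * (\<Sum>\<tau><N+L. \<alpha> (Suc \<tau>) * Dm (Suc \<tau>)) + nc\<^sup>2 * (\<Sum>\<tau><N+L. (\<alpha> (Suc \<tau>))\<^sup>2)"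
      by (simp add: r_def sum.distrib sum_distrib_left algebra_simps)
    also have "(\<Sum>\<tau><N+L. (\<alpha> (Suc \<tau>))\<^sup>2) \<le> S\<alpha>" unfolding S\<alpha>_def by (rule sum_le_suminf[OF sq']) auto
    finally have A: "\<gamma>^L' * (\<Sum>\<sigma><N. (Em (Suc \<sigma>))\<^sup>2) \<le> L * (Mx 1 + (2 * K1 * (\<Sum>\<tau><N+L. \<alpha> (Suc \<tau>) * Dm (Suc \<tau>)) + nc\<^sup>2 * S\<alpha>))"
      by (simp add: mult_left_mono)
    have pos: "2 * real L * K1 > 0" using Lr K1 by (intro mult_pos_pos) auto
    have "(\<gamma>^L' / (2 * L * K1)) * (\<Sum>\<sigma><N. (Em (Suc \<sigma>))\<^sup>2) = \<gamma>^L' * (\<Sum>\<sigma><N. (Em (Suc \<sigma>))\<^sup>2) / (2 * L * K1)"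
      by simp
    also have "\<dots> \<le> L * (Mx 1 + (2 * K1 * (\<Sum>\<tau><N+L. \<alpha> (Suc \<tau>) * Dm (Suc \<tau>)) + nc\<^sup>2 * S\<alpha>)) / (2 * L * K1)"
      using A pos by (intro divide_right_mono) auto
    also have "\<dots> = (Mx 1 + nc\<^sup>2 * S\<alpha>) / (2 * K1) + (\<Sum>\<tau><N+L. \<alpha> (Suc \<tau>) * Dm (Suc \<tau>))"
      using pos K1 by (simp add: field_simps L_def)
    finally show ?thesis by (simp add: LL)
  qed
  have "(\<lambda>s. Dm (Suc s)) \<longlonglongrightarrow> 0"
  proof (rule seq_main[where \<alpha>="\<lambda>s. \<alpha> (Suc s)" and E="\<lambda>s. Em (Suc s)" and \<rho>=\<rho> and L'=L' and cz="2*nc"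
        and cy="\<gamma>^L' / (2 * L * K1)" and Cz="(Mx 1 + nc\<^sup>2 * S\<alpha>) / (2 * K1)"])
    show "\<And>s. 0 \<le> \<alpha> (Suc s)" using step_pos less_imp_le by blast
    show "\<And>s. \<alpha> (Suc (Suc s)) \<le> \<alpha> (Suc s)" using step_mono by blast
    show "summable (\<lambda>s. (\<alpha> (Suc s))\<^sup>2)" by (rule sq')
    show "\<And>s. 0 \<le> Dm (Suc s)" by (rule Dm0)
    show "\<And>s. 0 \<le> Em (Suc s)" by (rule Em0)
    show "0 \<le> \<rho>" "\<rho> < 1" by (rule \<rho>)+
    show "Dm (Suc (s + Suc L')) \<le> \<rho> * Dm (Suc s) + 2 * (\<Sum>j<Suc L'. Em (Suc (s + j)))" for s
      using H1[of "Suc s"] by (simp add: \<rho>_def LL)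
    show "Dm (Suc (Suc s)) \<le> 3 * Dm (Suc s) + 2 * nc * \<alpha> (Suc s)" for s using H2[of "Suc s"] by simp
    show "0 \<le> 2 * nc" by (simp add: nc_def)
    show "\<gamma>^L' / (2 * L * K1) * (\<Sum>\<sigma><N. (Em (Suc \<sigma>))\<^sup>2) \<le> (Mx 1 + nc\<^sup>2 * S\<alpha>) / (2 * K1) + (\<Sum>\<tau><N + Suc L'. \<alpha> (Suc \<tau>) * Dm (Suc \<tau>))" for N
      by (rule H3)
    have pos: "2 * real L * K1 > 0" using Lr K1 by (intro mult_pos_pos) auto
    then show "0 < \<gamma>^L' / (2 * L * K1)" using \<gamma> by simp
  qed
  then have Dlim: "Dm \<longlonglongrightarrow> 0" by (rule LIMSEQ_imp_Suc)
  have alim: "\<alpha> \<longlonglongrightarrow> 0"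
  proof -
    have "(\<lambda>t. (\<alpha> t)\<^sup>2) \<longlonglongrightarrow> 0" by (rule summable_LIMSEQ_zero[OF step_sq])
    then have "(\<lambda>t. sqrt ((\<alpha> t)\<^sup>2)) \<longlonglongrightarrow> sqrt 0" by (rule tendsto_real_sqrt)
    then show ?thesis using step_pos by (simp add: less_imp_le)
  qed
  define q where "q t = 2 * Dm t + 2 * (\<alpha> t * nc)" for t
  have qlim: "q \<longlonglongrightarrow> 0" unfolding q_def using Dlim alim by (auto intro!: tendsto_eq_intros)
  have incr: "norm (\<theta> (Suc t) i - \<theta> t i) \<le> q t" if t1: "t \<ge> 1" for t i
  proof -
    have eq: "\<theta> (Suc t) i - \<theta> t i = (w t i - \<theta> t i) - \<alpha> t *\<^sub>R cc + e t i" by (simp add: dyn w_def)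
    have "norm ((w t i - \<theta> t i) - \<alpha> t *\<^sub>R cc + e t i) \<le> norm ((w t i - \<theta> t i) - \<alpha> t *\<^sub>R cc) + norm (e t i)"
      by (rule norm_triangle_ineq)
    moreover have "norm ((w t i - \<theta> t i) - \<alpha> t *\<^sub>R cc) \<le> norm (w t i - \<theta> t i) + norm (\<alpha> t *\<^sub>R cc)"
      by (metis norm_triangle_ineq4)
    moreover have "norm (\<alpha> t *\<^sub>R cc) = \<alpha> t * nc" using step_pos[of t] by (simp add: nc_def)
    ultimately show ?thesis unfolding eq q_def using wself[of t i] Ebound[OF t1, of i] by linarith
  qed
  have hdiff: "\<bar>(f i (fst (\<theta> (Suc t) i)) - snd (\<theta> (Suc t) i) $ i) - (f i (fst (\<theta> t i)) - snd (\<theta> t i) $ i)\<bar>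
      \<le> (Lf + 1) * norm (\<theta> (Suc t) i - \<theta> t i)" if t1: "t \<ge> 1" for t i
  proof -
    have X1: "fst (\<theta> (Suc t) i) \<in> X" using inOm[of "Suc t" i] by (auto simp: Om_def Omega_i_def split: prod.splits)
    have X0: "fst (\<theta> t i) \<in> X" using inOm[OF t1, of i] by (auto simp: Om_def Omega_i_def split: prod.splits)
    have "\<bar>f i (fst (\<theta> (Suc t) i)) - f i (fst (\<theta> t i))\<bar> \<le> Lf * norm (fst (\<theta> (Suc t) i) - fst (\<theta> t i))"
      by (rule Lf[OF X1 X0])
    also have "\<dots> \<le> Lf * norm (\<theta> (Suc t) i - \<theta> t i)" by (intro mult_left_mono norm_fst_diff Lf0)
    finally have 1: "\<bar>f i (fst (\<theta> (Suc t) i)) - f i (fst (\<theta> t i))\<bar> \<le> Lf * norm (\<theta> (Suc t) i - \<theta> t i)" .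
    have 2: "\<bar>snd (\<theta> (Suc t) i) $ i - snd (\<theta> t i) $ i\<bar> \<le> norm (\<theta> (Suc t) i - \<theta> t i)" by (rule norm_snd_comp_diff)
    show ?thesis using 1 2 by (simp add: algebra_simps abs_le_iff)
  qed
  show ?thesis
  proof (intro conjI allI impI)
    fix e1 e2 e3 :: real assume e: "e1 > 0" "e2 > 0" "e3 > 0"
    have "\<forall>\<^sub>F t in sequentially. Dm t < e1" using Dlim e(1) by (auto dest: order_tendstoD)
    moreover have "\<forall>\<^sub>F t in sequentially. q t < min e2 (e3 / (Lf + 1))"
    proof (rule order_tendstoD(2)[OF qlim])
      show "0 < min e2 (e3 / (Lf + 1))" using e Lf0 by simp
    qed
    ultimately have "\<forall>\<^sub>F t in sequentially. Dm t < e1 \<and> q t < min e2 (e3 / (Lf + 1))" by eventually_elim auto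
    then obtain N where N: "\<And>t. t \<ge> N \<Longrightarrow> Dm t < e1 \<and> q t < min e2 (e3 / (Lf + 1))"
      unfolding eventually_sequentially by blast
    show "\<exists>T::nat. T \<ge> 1 \<and> (\<forall>t\<ge>T. \<forall>i j.
               norm (\<theta> t i - \<theta> t j) \<le> e1 \<and>
               norm (\<theta> t i - \<theta> (t - 1) i) \<le> e2 \<and>
               \<bar>(f i (fst (\<theta> t i)) - snd (\<theta> t i) $ i)
                 - (f i (fst (\<theta> (t - 1) i)) - snd (\<theta> (t - 1) i) $ i)\<bar> \<le> e3)"
    proof (intro exI[of _ "N + 2"] conjI allI impI)
      show "1 \<le> N + 2" by simp
      fix t i j assume t: "N + 2 \<le> t"
      obtain t0 where t0: "t = Suc t0" using t by (cases t) auto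
      have t01: "t0 \<ge> 1" "t0 \<ge> N" using t t0 by auto
      show "norm (\<theta> t i - \<theta> t j) \<le> e1" using Dle[of t i j] N[of t] t by force
      have qt: "q t0 < min e2 (e3 / (Lf + 1))" using N[OF t01(2)] by blast
      show "norm (\<theta> t i - \<theta> (t - 1) i) \<le> e2" using incr[OF t01(1), of i] qt t0 by simp
      have "(Lf + 1) * norm (\<theta> (Suc t0) i - \<theta> t0 i) \<le> (Lf + 1) * (e3 / (Lf + 1))"
        using incr[OF t01(1), of i] qt Lf0 by (intro mult_left_mono) auto
      also have "\<dots> = e3" using Lf0 by simp
      finally show "\<bar>(f i (fst (\<theta> t i)) - snd (\<theta> t i) $ i) - (f i (fst (\<theta> (t - 1) i)) - snd (\<theta> (t - 1) i) $ i)\<bar> \<le> e3"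
        using hdiff[OF t01(1), of i] t0 by simp
    qed
  next
    fix t :: nat and i assume "1 \<le> t"
    then show "\<theta> t i \<in> Omega_i X f g Yk eps i" using inOm by (simp add: Om_def)
  qed
qed

end
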